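(* Let $G$ be an entire function such that the operator $A$ on $\mathcal{F}^2$ given by $Af=Gf'$ (for $f$ in its domain) is the generator of a quasicontractive $C_0$ semigroup on $\mathcal{F}^2$. Then $G$ is a polynomial of degree at most $1$, say $G(z)=az+b$, with $\operatorname{Re}a\le 0$.
   Context: $\mathcal{F}^2$ is the Hilbert space of entire functions $f$ with $\|f\|_2^2=\frac{1}{\pi}\int_{\mathbb{C}}|f(z)|^2e^{-|z|^2}\,dm(z)<\infty$; the functions $z^n/\sqrt{n!}$, $n\ge0$, form an orthonormal basis. A $C_0$ semigroup $(T_t)_{t\ge0}$ is quasicontractive if there is $\omega\in\mathbb{R}$ with $\|T_t\|\le e^{\omega t}$ for all $t\ge0$. The generator is $Ax=\lim_{t\to0}(T_tx-x)/t$ on the set where the limit exists. *)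

theory Defs
  imports "HOL-Complex_Analysis.Complex_Analysis"
begin

definition fock_integral :: "(complex \<Rightarrow> complex) \<Rightarrow> ennreal" where
  "fock_integral f = (\<integral>\<^sup>+ z. ennreal ((cmod (f z))\<^sup>2 * exp (- (cmod z)\<^sup>2)) \<partial>lborel)"

definition Fock2 :: "(complex \<Rightarrow> complex) set" where
  "Fock2 = {f. f holomorphic_on UNIV \<and> fock_integral f < \<infinity>}"

definition fock_norm :: "(complex \<Rightarrow> complex) \<Rightarrow> real" where
  "fock_norm f = sqrt (enn2real (fock_integral f) / pi)"

text \<open>A C_0 semigroup of bounded linear operators on F^2 (operators given as maps on
  functions, relevant only on F^2).\<close>

definition C0_semigroup_Fock :: "(real \<Rightarrow> (complex \<Rightarrow> complex) \<Rightarrow> (complex \<Rightarrow> complex)) \<Rightarrow> bool" where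
  "C0_semigroup_Fock T \<longleftrightarrow>
     (\<forall>t\<ge>0. \<forall>f\<in>Fock2. T t f \<in> Fock2) \<and>
     (\<forall>t\<ge>0. \<forall>f\<in>Fock2. \<forall>g\<in>Fock2. \<forall>c::complex.
         T t (\<lambda>z. c * f z + g z) = (\<lambda>z. c * T t f z + T t g z)) \<and>
     (\<forall>t\<ge>0. \<exists>C::real. \<forall>f\<in>Fock2. fock_norm (T t f) \<le> C * fock_norm f) \<and>
     (\<forall>f\<in>Fock2. T 0 f = f) \<and>
     (\<forall>s\<ge>0. \<forall>t\<ge>0. \<forall>f\<in>Fock2. T (s + t) f = T s (T t f)) \<and>
     (\<forall>f\<in>Fock2. ((\<lambda>t. fock_norm (\<lambda>z. T t f z - f z)) \<longlongrightarrow> 0) (at_right 0))"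

definition quasicontractive_Fock :: "(real \<Rightarrow> (complex \<Rightarrow> complex) \<Rightarrow> (complex \<Rightarrow> complex)) \<Rightarrow> bool" where
  "quasicontractive_Fock T \<longleftrightarrow>
     (\<exists>\<omega>::real. \<forall>t\<ge>0. \<forall>f\<in>Fock2. fock_norm (T t f) \<le> exp (\<omega> * t) * fock_norm f)"

definition gen_limit :: "(real \<Rightarrow> (complex \<Rightarrow> complex) \<Rightarrow> (complex \<Rightarrow> complex)) \<Rightarrow>
    (complex \<Rightarrow> complex) \<Rightarrow> (complex \<Rightarrow> complex) \<Rightarrow> bool" where
  "gen_limit T f g \<longleftrightarrow> g \<in> Fock2 \<and>
     ((\<lambda>t. fock_norm (\<lambda>z. (T t f z - f z) / complex_of_real t - g z)) \<longlongrightarrow> 0) (at_right 0)"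

definition gen_domain :: "(real \<Rightarrow> (complex \<Rightarrow> complex) \<Rightarrow> (complex \<Rightarrow> complex)) \<Rightarrow>
    (complex \<Rightarrow> complex) set" where
  "gen_domain T = {f \<in> Fock2. \<exists>g. gen_limit T f g}"

definition is_generator_Fock :: "(real \<Rightarrow> (complex \<Rightarrow> complex) \<Rightarrow> (complex \<Rightarrow> complex)) \<Rightarrow>
    (complex \<Rightarrow> complex) set \<Rightarrow> ((complex \<Rightarrow> complex) \<Rightarrow> (complex \<Rightarrow> complex)) \<Rightarrow> bool" where
  "is_generator_Fock T D A \<longleftrightarrow> gen_domain T = D \<and> (\<forall>f\<in>D. gen_limit T f (A f))"

end

theory Submission
  imports Defs "HOL-Probability.Probability"
begin


definition v2c :: "real^2 \<Rightarrow> complex" where "v2c v = Complex (vec_nth v 1) (vec_nth v 2)"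
definition c2v :: "complex \<Rightarrow> real^2" where "c2v z = (\<chi> i. if i = 1 then Re z else Im z)"

lemma c2v_nth [simp]: "vec_nth (c2v z) 1 = Re z" "vec_nth (c2v z) 2 = Im z"
  by (simp_all add: c2v_def)

lemma v2c_alt: "v2c v = complex_of_real (vec_nth v 1) + \<i> * complex_of_real (vec_nth v 2)"
  by (simp add: v2c_def complex_eq_iff)

lemma v2c_cont: "continuous_on UNIV v2c"
  unfolding v2c_alt[abs_def] by (intro continuous_intros)


lemma v2c_measurable [measurable]: "v2c \<in> borel_measurable borel"
  using v2c_cont borel_measurable_continuous_onI by blast

lemma prod_Basis_2: "(\<Prod>b\<in>(Basis::(real^2) set). f b) = f (axis 1 1) * f (axis 2 1)"
proof -
  have B: "(Basis::(real^2) set) = {axis 1 1, axis 2 1}"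
    using exhaust_2 by (auto simp: Basis_vec_def) (metis exhaust_2)
  have "axis (1::2) (1::real) \<noteq> axis 2 1" by (simp add: axis_eq_axis)
  then show ?thesis by (subst B) simp
qed

lemma Basis_2_cases: "b \<in> (Basis::(real^2) set) \<Longrightarrow> b = axis 1 1 \<or> b = axis 2 1"
  by (auto simp: Basis_vec_def) (metis exhaust_2)

lemma v2c_distr: "distr lborel borel v2c = lborel"
proof (rule lborel_eqI[symmetric])
  fix l u :: complex
  assume le: "\<And>b. b \<in> Basis \<Longrightarrow> l \<bullet> b \<le> u \<bullet> b"
  have le': "Re l \<le> Re u" "Im l \<le> Im u" using le[of 1] le[of \<i>] by (auto simp: Basis_complex_def)
  have pre: "v2c -` box l u = box (c2v l) (c2v u)"
    by (auto simp: mem_box_cart mem_box Basis_complex_def v2c_def intro: exhaust_2)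
      (metis c2v_nth exhaust_2)+
  have "emeasure (distr lborel borel v2c) (box l u) = emeasure lborel (v2c -` box l u)"
    by (simp add: emeasure_distr)
  also have "\<dots> = ennreal ((Re u - Re l) * (Im u - Im l))"
    unfolding pre using le'
    apply (subst emeasure_lborel_box)
    subgoal for b using Basis_2_cases[of b] by (auto simp: inner_axis)
    by (simp add: prod_Basis_2 inner_axis)
  finally show "emeasure (distr lborel borel v2c) (box l u) = (\<Prod>b\<in>Basis. (u - l) \<bullet> b)"
    by (simp add: Basis_complex_def)
qed simp

definition rot2 :: "real \<Rightarrow> real^2 \<Rightarrow> real^2" where
  "rot2 t v = (\<chi> i. if i = 1 then cos t * vec_nth v 1 - sin t * vec_nth v 2
                     else sin t * vec_nth v 1 + cos t * vec_nth v 2)"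

lemma rot2_nth [simp]: "vec_nth (rot2 t v) 1 = cos t * vec_nth v 1 - sin t * vec_nth v 2"
   "vec_nth (rot2 t v) 2 = sin t * vec_nth v 1 + cos t * vec_nth v 2"
  by (simp_all add: rot2_def)

lemma v2c_rot2: "v2c (rot2 t v) = cis t * v2c v"
  by (simp add: v2c_def complex_eq_iff)

lemma rot2_inv: "rot2 (-t) (rot2 t v) = v"
proof -
  have c: "cos t * cos t + sin t * sin t = 1" by (simp add: sin_cos_squared_add3)
  have 1: "cos t * (cos t * a - sin t * b) + sin t * (sin t * a + cos t * b) = (cos t * cos t + sin t * sin t) * a" for a b :: real
    by algebra
  have 2: "- (sin t * (cos t * a - sin t * b)) + cos t * (sin t * a + cos t * b) = (cos t * cos t + sin t * sin t) * b" for a b :: real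
    by algebra
  have "vec_nth (rot2 (-t) (rot2 t v)) i = vec_nth v i" for i
    using exhaust_2[of i] 1 2 c by auto
  then show ?thesis by (simp add: vec_eq_iff)
qed

lemma rot2_linear: "linear (rot2 t)"
  by (rule linearI) (simp_all add: vec_eq_iff rot2_def algebra_simps)

lemma rot2_orth: "orthogonal_transformation (rot2 t)"
proof -
  have c: "cos t * cos t + sin t * sin t = 1" by (simp add: sin_cos_squared_add3)
  have "rot2 t v \<bullet> rot2 t w = v \<bullet> w" for v w
  proof -
    have e: "(x * a - y * b) * (x * c - y * d) + (y * a + x * b) * (y * c + x * d) = (x * x + y * y) * (a * c + b * d)" for x y a b c d :: real
      by algebra
    show ?thesis using c by (simp add: inner_vec_def sum_2 e)
  qed
  then show ?thesis using rot2_linear by (simp add: orthogonal_transformation_def)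
qed

lemma rot2_cont: "continuous_on UNIV (rot2 t)"
  using rot2_linear linear_continuous_on linear_linear by blast

lemma rot2_measurable [measurable]: "rot2 t \<in> borel_measurable borel"
  using rot2_cont borel_measurable_continuous_onI by blast

lemma rot2_distr: "distr lborel borel (rot2 t) = lborel"
proof (rule lborel_eqI[symmetric])
  fix l u :: "real^2"
  assume le: "\<And>b. b \<in> Basis \<Longrightarrow> l \<bullet> b \<le> u \<bullet> b"
  define X where "X = rot2 t -` box l u"
  have XI: "X = rot2 (-t) ` box l u"
    unfolding X_def using rot2_inv[of t] rot2_inv[of "-t"] by (auto simp: image_iff) (metis minus_minus)
  have "open X" unfolding X_def
    using rot2_cont open_box by (intro open_vimage) auto
  then have Xb: "X \<in> sets lborel" by simp
  have "bounded X" unfolding XI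
    using bounded_box rot2_linear bounded_linear_image linear_linear by blast
  then have Xf: "emeasure lborel X < \<infinity>" by (rule emeasure_bounded_finite)
  have "measure lebesgue X = measure lebesgue (box l u)"
    unfolding XI by (rule measure_orthogonal_image[OF rot2_orth]) simp
  then have "measure lborel X = measure lborel (box l u)"
    using Xb by (simp add: measure_completion)
  then have "emeasure lborel X = emeasure lborel (box l u)"
    using Xf emeasure_lborel_box_finite[of l u]
    by (simp add: emeasure_eq_ennreal_measure less_top)
  then show "emeasure (distr lborel borel (rot2 t)) (box l u) = (\<Prod>b\<in>Basis. (u - l) \<bullet> b)"
    using le by (simp add: emeasure_distr X_def)
qed simp

lemma lborel_rot: "distr lborel borel (\<lambda>z. cis t * z) = (lborel :: complex measure)"
proof -
  have m: "(\<lambda>z. cis t * z) \<in> borel_measurable borel" by measurable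
  have "distr lborel borel (\<lambda>z. cis t * z) = distr (distr lborel borel v2c) borel (\<lambda>z. cis t * z)"
    by (simp add: v2c_distr)
  also have "\<dots> = distr lborel borel ((\<lambda>z. cis t * z) \<circ> v2c)"
    by (subst distr_distr) (use m in auto)
  also have "(\<lambda>z. cis t * z) \<circ> v2c = v2c \<circ> rot2 t"
    by (simp add: fun_eq_iff v2c_rot2)
  also have "distr lborel borel (v2c \<circ> rot2 t) = distr (distr lborel borel (rot2 t)) borel v2c"
    by (subst distr_distr) auto
  also have "\<dots> = lborel" by (simp add: rot2_distr v2c_distr)
  finally show ?thesis .
qed

lemma nn_integral_rot:
  assumes [measurable]: "f \<in> borel_measurable borel"
  shows "(\<integral>\<^sup>+ z. f (cis t * z) \<partial>lborel) = (\<integral>\<^sup>+ z. f z \<partial>(lborel :: complex measure))"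
proof -
  have "(\<integral>\<^sup>+ z. f z \<partial>(lborel :: complex measure)) = (\<integral>\<^sup>+ z. f z \<partial>distr lborel borel (\<lambda>z. cis t * z))"
    by (simp add: lborel_rot)
  also have "\<dots> = (\<integral>\<^sup>+ z. f (cis t * z) \<partial>lborel)"
    by (subst nn_integral_distr) auto
  finally show ?thesis ..
qed

lemma nn_integral_transl:
  assumes [measurable]: "f \<in> borel_measurable borel"
  shows "(\<integral>\<^sup>+ z. f (w + z) \<partial>lborel) = (\<integral>\<^sup>+ z. f z \<partial>(lborel :: complex measure))"
proof -
  have "(\<integral>\<^sup>+ z. f z \<partial>(lborel :: complex measure)) = (\<integral>\<^sup>+ z. f z \<partial>distr lborel borel ((+) w))"
    by (simp add: lborel_distr_plus)
  also have "\<dots> = (\<integral>\<^sup>+ z. f (w + z) \<partial>lborel)"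
    by (subst nn_integral_distr) auto
  finally show ?thesis ..
qed


lemma gauss1: "(\<integral>\<^sup>+ x. ennreal (exp (- x\<^sup>2)) \<partial>lborel) = ennreal (sqrt pi)"
proof -
  define s :: real where "s = sqrt (1/2)"
  have s2: "s\<^sup>2 = 1/2" by (simp add: s_def)
  have s0: "s > 0" by (simp add: s_def)
  have nd: "normal_density 0 s x = exp (- x\<^sup>2) / sqrt pi" for x
    by (simp add: normal_density_def s2)
  have "(\<integral>\<^sup>+ x. ennreal (normal_density 0 s x) \<partial>lborel) = ennreal 1"
    by (subst nn_integral_eq_integral) (auto simp: s0 less_imp_le normal_density_nonneg)
  then have "(\<integral>\<^sup>+ x. ennreal (exp (- x\<^sup>2) / sqrt pi) \<partial>lborel) = 1" by (simp add: nd)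
  then have "ennreal (sqrt pi) * (\<integral>\<^sup>+ x. ennreal (exp (- x\<^sup>2) / sqrt pi) \<partial>lborel) = ennreal (sqrt pi)" by simp
  moreover have "ennreal (sqrt pi) * (\<integral>\<^sup>+ x. ennreal (exp (- x\<^sup>2) / sqrt pi) \<partial>lborel)
      = (\<integral>\<^sup>+ x. ennreal (exp (- x\<^sup>2)) \<partial>lborel)"
    by (subst nn_integral_cmult[symmetric]) (auto simp: ennreal_mult[symmetric] intro!: nn_integral_cong)
  ultimately show ?thesis by simp
qed

lemma cmod_v2c_sq: "(cmod (v2c v))\<^sup>2 = (vec_nth v 1)\<^sup>2 + (vec_nth v 2)\<^sup>2"
  by (simp add: v2c_def cmod_power2)

lemma gauss2: "(\<integral>\<^sup>+ z. ennreal (exp (- (cmod z)\<^sup>2)) \<partial>lborel) = ennreal pi"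
proof -
  have "(\<integral>\<^sup>+ z. ennreal (exp (- (cmod z)\<^sup>2)) \<partial>lborel)
      = (\<integral>\<^sup>+ z. ennreal (exp (- (cmod z)\<^sup>2)) \<partial>distr lborel borel v2c)"
    by (simp add: v2c_distr)
  also have "\<dots> = (\<integral>\<^sup>+ v. ennreal (exp (- (cmod (v2c v))\<^sup>2)) \<partial>lborel)"
    by (subst nn_integral_distr) auto
  also have "\<dots> = (\<integral>\<^sup>+ (v::real^2). (\<Prod>b\<in>Basis. ennreal (exp (- (v \<bullet> b)\<^sup>2))) \<partial>lborel)"
    by (intro nn_integral_cong)
       (simp add: prod_Basis_2 inner_axis cmod_v2c_sq exp_add[symmetric] ennreal_mult[symmetric])
  also have "\<dots> = (\<Prod>b\<in>(Basis::(real^2) set). (\<integral>\<^sup>+ x. ennreal (exp (- x\<^sup>2)) \<partial>lborel))"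
    by (rule nn_integral_lborel_prod) auto
  also have "\<dots> = ennreal pi"
  proof -
    have "ennreal (sqrt pi) * ennreal (sqrt pi) = ennreal pi"
      by (subst ennreal_mult[symmetric]) auto
    then show ?thesis unfolding prod_Basis_2 gauss1 by simp
  qed
  finally show ?thesis .
qed

lemma cis_measurable [measurable]: "cis \<in> borel_measurable borel"
  by (intro borel_measurable_continuous_onI continuous_intros)

lemma holo_measurable: "g holomorphic_on UNIV \<Longrightarrow> g \<in> borel_measurable borel"
  by (intro borel_measurable_continuous_onI holomorphic_on_imp_continuous_on)

lemma mean_value_circle:
  fixes g :: "complex \<Rightarrow> complex"
  assumes g: "g holomorphic_on UNIV"
  shows "((\<lambda>t. g (cis t * z)) has_integral (2 * pi * g 0)) {0..2*pi}"
proof (cases "z = 0")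
  case True
  then show ?thesis using has_integral_const_real[of "g 0" 0 "2*pi"] by (simp add: scaleR_conv_of_real algebra_simps)
next
  case False
  define r where "r = cmod z"
  have r: "r > 0" using False by (simp add: r_def)
  define e where "e = z / complex_of_real r"
  define h where "h = (\<lambda>u. g (e * u))"
  have hh: "h holomorphic_on cball 0 r"
    unfolding h_def by (intro holomorphic_on_compose_gen[OF _ g, unfolded o_def] holomorphic_intros) auto
  have "((\<lambda>u. h u / (u - 0)) has_contour_integral 2 * complex_of_real pi * \<i> * h 0) (circlepath 0 r)"
    by (rule Cauchy_integral_circlepath_simple[OF hh]) (use r in simp)
  then have "((\<lambda>t. h (0 + complex_of_real r * cis t) / (0 + complex_of_real r * cis t - 0) * complex_of_real r * \<i> * cis t)
      has_integral 2 * complex_of_real pi * \<i> * h 0) {0..2*pi}"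
    unfolding circlepath_def by (subst (asm) has_contour_integral_part_circlepath_iff) auto
  moreover have "h (0 + complex_of_real r * cis t) / (0 + complex_of_real r * cis t - 0) * complex_of_real r * \<i> * cis t
      = \<i> * g (cis t * z)" for t
  proof -
    have "cis t \<noteq> 0" by simp
    moreover have "e * (complex_of_real r * cis t) = cis t * z" using r by (simp add: e_def)
    then have "h (0 + complex_of_real r * cis t) = g (cis t * z)" unfolding h_def by (metis add_0)
    ultimately show ?thesis using r by (simp add: field_simps)
  qed
  ultimately have "((\<lambda>t. \<i> * g (cis t * z)) has_integral \<i> * (2 * pi * g 0)) {0..2*pi}"
    by (simp add: h_def algebra_simps)
  then have "((\<lambda>t. (-\<i>) * (\<i> * g (cis t * z))) has_integral (-\<i>) * (\<i> * (2 * pi * g 0))) {0..2*pi}"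
    by (rule has_integral_mult_right)
  then show ?thesis by simp
qed

lemma sub_mean_circle:
  fixes g :: "complex \<Rightarrow> complex"
  assumes g: "g holomorphic_on UNIV"
  shows "(\<lambda>t. (cmod (g (cis t * z)))\<^sup>2) integrable_on {0..2*pi}"
    and "2 * pi * (cmod (g 0))\<^sup>2 \<le> integral {0..2*pi} (\<lambda>t. (cmod (g (cis t * z)))\<^sup>2)"
proof -
  define \<phi> where "\<phi> = (\<lambda>t. g (cis t * z))"
  define m where "m = g 0"
  have cg: "continuous_on UNIV g" using g holomorphic_on_imp_continuous_on by blast
  have c\<phi>: "continuous_on {0..2*pi} \<phi>"
    unfolding \<phi>_def by (intro continuous_on_compose2[OF cg] continuous_intros) auto
  have i1: "(\<lambda>t. (cmod (\<phi> t))\<^sup>2) integrable_on {0..2*pi}"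
    by (intro integrable_continuous_interval continuous_intros c\<phi>)
  then show "(\<lambda>t. (cmod (g (cis t * z)))\<^sup>2) integrable_on {0..2*pi}" by (simp add: \<phi>_def)
  have mv: "(\<phi> has_integral (2 * pi * m)) {0..2*pi}"
    unfolding \<phi>_def m_def by (rule mean_value_circle[OF g])
  have bl: "bounded_linear (\<lambda>x. Re (cnj m * x))"
    by (intro bounded_linear_compose[OF bounded_linear_Re] bounded_linear_mult_right)
  have i2: "((\<lambda>t. Re (cnj m * \<phi> t)) has_integral Re (cnj m * (2 * pi * m))) {0..2*pi}"
    using has_integral_linear[OF mv bl] by (simp add: o_def)
  have e2: "Re (cnj m * (2 * pi * m)) = 2 * pi * (cmod m)\<^sup>2"
    unfolding cmod_power2 by (simp add: power2_eq_square algebra_simps)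
  have i3: "((\<lambda>t. (cmod m)\<^sup>2) has_integral (2 * pi * (cmod m)\<^sup>2)) {0..2*pi}"
    using has_integral_const_real[of "(cmod m)\<^sup>2" 0 "2*pi"] by simp
  have pw: "(cmod (\<phi> t - m))\<^sup>2 = (cmod (\<phi> t))\<^sup>2 - 2 * Re (cnj m * \<phi> t) + (cmod m)\<^sup>2" for t
    unfolding cmod_power2 by (simp add: power2_eq_square algebra_simps)
  have "((\<lambda>t. (cmod (\<phi> t))\<^sup>2 - 2 * Re (cnj m * \<phi> t) + (cmod m)\<^sup>2) has_integral
      (integral {0..2*pi} (\<lambda>t. (cmod (\<phi> t))\<^sup>2) - 2 * (2 * pi * (cmod m)\<^sup>2) + 2 * pi * (cmod m)\<^sup>2)) {0..2*pi}"
    by (intro has_integral_add has_integral_diff has_integral_mult_right i3 integrable_integral i1 i2[unfolded e2])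
  then have "((\<lambda>t. (cmod (\<phi> t - m))\<^sup>2) has_integral
      (integral {0..2*pi} (\<lambda>t. (cmod (\<phi> t))\<^sup>2) - 2 * pi * (cmod m)\<^sup>2)) {0..2*pi}"
    unfolding pw by (simp add: algebra_simps)
  then have "0 \<le> integral {0..2*pi} (\<lambda>t. (cmod (\<phi> t))\<^sup>2) - 2 * pi * (cmod m)\<^sup>2"
    by (rule has_integral_nonneg) simp
  then show "2 * pi * (cmod (g 0))\<^sup>2 \<le> integral {0..2*pi} (\<lambda>t. (cmod (g (cis t * z)))\<^sup>2)"
    by (simp add: \<phi>_def m_def)
qed

lemma fock_eval0:
  fixes g :: "complex \<Rightarrow> complex"
  assumes g: "g holomorphic_on UNIV"
  shows "ennreal (pi * (cmod (g 0))\<^sup>2) \<le> fock_integral g"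
proof -
  have gm [measurable]: "g \<in> borel_measurable borel" using holo_measurable g by blast
  define W where "W z = exp (- (cmod z)\<^sup>2)" for z :: complex
  have Wm [measurable]: "W \<in> borel_measurable borel" unfolding W_def by measurable
  define F where "F t z = ennreal (indicator {0..2*pi} t * ((cmod (g (cis t * z)))\<^sup>2 * W z))" for t :: real and z
  have Fm: "(\<lambda>(t, z). F t z) \<in> borel_measurable (lborel \<Otimes>\<^sub>M lborel)" unfolding F_def by measurable
  have step1: "ennreal (pi * (cmod (g 0))\<^sup>2) = (\<integral>\<^sup>+ z. ennreal ((cmod (g 0))\<^sup>2 * W z) \<partial>lborel)"
  proof -
    have "(\<integral>\<^sup>+ z. ennreal ((cmod (g 0))\<^sup>2 * W z) \<partial>lborel) = ennreal ((cmod (g 0))\<^sup>2) * (\<integral>\<^sup>+ z. ennreal (W z) \<partial>lborel)"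
      by (subst nn_integral_cmult[symmetric]) (auto simp: ennreal_mult W_def)
    also have "\<dots> = ennreal ((cmod (g 0))\<^sup>2) * ennreal pi" unfolding W_def gauss2 ..
    also have "\<dots> = ennreal (pi * (cmod (g 0))\<^sup>2)" by (simp add: ennreal_mult[symmetric] mult.commute)
    finally show ?thesis ..
  qed
  have pt: "ennreal ((cmod (g 0))\<^sup>2 * W z) \<le> ennreal (1 / (2*pi)) * (\<integral>\<^sup>+ t. F t z \<partial>lborel)" for z
  proof -
    define I where "I = integral {0..2*pi} (\<lambda>t. (cmod (g (cis t * z)))\<^sup>2)"
    have hi: "((\<lambda>t. (cmod (g (cis t * z)))\<^sup>2) has_integral I) {0..2*pi}"
      unfolding I_def using sub_mean_circle(1)[OF g, of z] by (simp add: integrable_integral)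
    have le: "2 * pi * (cmod (g 0))\<^sup>2 \<le> I" unfolding I_def by (rule sub_mean_circle(2)[OF g])
    have hi2: "((\<lambda>t. (cmod (g (cis t * z)))\<^sup>2 * W z) has_integral I * W z) {0..2*pi}"
      by (rule has_integral_mult_left[OF hi])
    have "(\<integral>\<^sup>+ t. F t z \<partial>lborel) = ennreal (I * W z)"
      unfolding F_def by (rule nn_integral_has_integral_lebesgue[OF _ hi2]) (simp add: W_def)
    moreover have "(cmod (g 0))\<^sup>2 * W z \<le> 1 / (2*pi) * (I * W z)"
    proof -
      have "(cmod (g 0))\<^sup>2 \<le> I / (2 * pi)" using le by (simp add: field_simps)
      then have "(cmod (g 0))\<^sup>2 * W z \<le> I / (2 * pi) * W z"
        by (rule mult_right_mono) (simp add: W_def)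
      then show ?thesis by simp
    qed
    moreover have "0 \<le> I * W z"
      using le by (intro mult_nonneg_nonneg) (auto simp: W_def intro: order_trans[rotated])
    moreover have "ennreal (1 / (2*pi)) * ennreal (I * W z) = ennreal (1 / (2*pi) * (I * W z))"
      using calculation(3) by (subst ennreal_mult) auto
    ultimately show ?thesis
      by (simp add: ennreal_leI)
  qed
  have inner: "(\<integral>\<^sup>+ z. F t z \<partial>lborel) = fock_integral g * indicator {0..2*pi} t" for t
  proof (cases "t \<in> {0..2*pi}")
    case True
    have "(\<integral>\<^sup>+ z. F t z \<partial>lborel) = (\<integral>\<^sup>+ z. (\<lambda>u. ennreal ((cmod (g u))\<^sup>2 * W u)) (cis t * z) \<partial>lborel)"
      unfolding F_def using True by (intro nn_integral_cong) (simp add: W_def norm_mult)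
    also have "\<dots> = (\<integral>\<^sup>+ z. ennreal ((cmod (g z))\<^sup>2 * W z) \<partial>lborel)"
      by (rule nn_integral_rot) measurable
    finally show ?thesis using True by (simp add: fock_integral_def W_def)
  next
    case False
    then show ?thesis by (simp add: F_def)
  qed
  have "ennreal (pi * (cmod (g 0))\<^sup>2) \<le> (\<integral>\<^sup>+ z. ennreal (1 / (2*pi)) * (\<integral>\<^sup>+ t. F t z \<partial>lborel) \<partial>lborel)"
    unfolding step1 by (intro nn_integral_mono pt)
  also have "\<dots> = ennreal (1 / (2*pi)) * (\<integral>\<^sup>+ z. (\<integral>\<^sup>+ t. F t z \<partial>lborel) \<partial>lborel)"
    by (rule nn_integral_cmult) (use Fm in measurable)
  also have "(\<integral>\<^sup>+ z. (\<integral>\<^sup>+ t. F t z \<partial>lborel) \<partial>lborel) = (\<integral>\<^sup>+ t. (\<integral>\<^sup>+ z. F t z \<partial>lborel) \<partial>lborel)"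
    by (rule lborel_pair.Fubini'[OF Fm])
  also have "\<dots> = (\<integral>\<^sup>+ t. fock_integral g * indicator {0..2*pi} t \<partial>lborel)"
    by (simp add: inner)
  also have "\<dots> = fock_integral g * ennreal (2 * pi)"
    by (subst nn_integral_cmult_indicator) auto
  also have "ennreal (1 / (2*pi)) * (fock_integral g * ennreal (2 * pi)) = fock_integral g * (ennreal (1 / (2*pi)) * ennreal (2 * pi))"
    by (simp add: ac_simps)
  also have "ennreal (1 / (2*pi)) * ennreal (2 * pi) = 1"
    by (subst ennreal_mult[symmetric]) auto
  finally show ?thesis by simp
qed

lemma fock_eval:
  fixes h :: "complex \<Rightarrow> complex"
  assumes h: "h holomorphic_on UNIV"
  shows "ennreal (pi * (cmod (h w))\<^sup>2) \<le> ennreal (exp ((cmod w)\<^sup>2)) * fock_integral h"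
proof -
  have hm [measurable]: "h \<in> borel_measurable borel" using holo_measurable h by blast
  define g where "g z = h (w + z) * exp (- (cnj w * z))" for z
  have gh: "g holomorphic_on UNIV"
  proof -
    have "(h \<circ> (\<lambda>z. w + z)) holomorphic_on UNIV"
      by (rule holomorphic_on_compose) (auto intro!: holomorphic_intros h)
    then show ?thesis unfolding g_def o_def by (intro holomorphic_intros)
  qed
  have g0: "g 0 = h w" by (simp add: g_def)
  have pw: "(cmod (g z))\<^sup>2 * exp (-(cmod z)\<^sup>2) = exp ((cmod w)\<^sup>2) * ((cmod (h (w + z)))\<^sup>2 * exp (-(cmod (w + z))\<^sup>2))" for z
  proof -
    have e1: "(cmod (exp (- (cnj w * z))))\<^sup>2 = exp (- 2 * Re (cnj w * z))"
      by (simp add: norm_exp_eq_Re power2_eq_square exp_add[symmetric])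
    have e2: "(cmod (w + z))\<^sup>2 = (cmod w)\<^sup>2 + 2 * Re (cnj w * z) + (cmod z)\<^sup>2"
      unfolding cmod_power2 by (simp add: power2_eq_square algebra_simps)
    have "(cmod (g z))\<^sup>2 * exp (-(cmod z)\<^sup>2) = (cmod (h (w + z)))\<^sup>2 * (exp (- 2 * Re (cnj w * z)) * exp (-(cmod z)\<^sup>2))"
      unfolding g_def norm_mult power_mult_distrib e1 by (simp only: mult.assoc)
    also have "exp (- 2 * Re (cnj w * z)) * exp (-(cmod z)\<^sup>2) = exp ((cmod w)\<^sup>2) * exp (-(cmod (w + z))\<^sup>2)"
      unfolding e2 exp_add[symmetric] by (simp add: algebra_simps)
    finally show ?thesis by (simp add: algebra_simps)
  qed
  have "fock_integral g = (\<integral>\<^sup>+ z. ennreal (exp ((cmod w)\<^sup>2)) * ennreal ((cmod (h (w + z)))\<^sup>2 * exp (-(cmod (w + z))\<^sup>2)) \<partial>lborel)"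
    unfolding fock_integral_def pw by (intro nn_integral_cong) (simp add: ennreal_mult)
  also have "\<dots> = ennreal (exp ((cmod w)\<^sup>2)) * (\<integral>\<^sup>+ z. (\<lambda>u. ennreal ((cmod (h u))\<^sup>2 * exp (-(cmod u)\<^sup>2))) (w + z) \<partial>lborel)"
    by (subst nn_integral_cmult) auto
  also have "(\<integral>\<^sup>+ z. (\<lambda>u. ennreal ((cmod (h u))\<^sup>2 * exp (-(cmod u)\<^sup>2))) (w + z) \<partial>lborel) = fock_integral h"
    unfolding fock_integral_def by (rule nn_integral_transl) measurable
  finally have "fock_integral g = ennreal (exp ((cmod w)\<^sup>2)) * fock_integral h" .
  with fock_eval0[OF gh] g0 show ?thesis by simp
qed


lemma Fock2_holo: "f \<in> Fock2 \<Longrightarrow> f holomorphic_on UNIV"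
  by (simp add: Fock2_def)

lemma Fock2_fin: "f \<in> Fock2 \<Longrightarrow> fock_integral f < \<infinity>"
  by (simp add: Fock2_def)

lemma fock_norm_nonneg: "fock_norm f \<ge> 0"
  by (simp add: fock_norm_def)

lemma fock_integral_eq: "f \<in> Fock2 \<Longrightarrow> fock_integral f = ennreal (pi * (fock_norm f)\<^sup>2)"
proof -
  assume f: "f \<in> Fock2"
  have "(fock_norm f)\<^sup>2 = enn2real (fock_integral f) / pi"
    by (simp add: fock_norm_def)
  then have "pi * (fock_norm f)\<^sup>2 = enn2real (fock_integral f)" by simp
  then show ?thesis using Fock2_fin[OF f] by (simp add: ennreal_enn2real_if)
qed

lemma fock_eval_bound:
  assumes f: "f \<in> Fock2"
  shows "(cmod (f w))\<^sup>2 \<le> exp ((cmod w)\<^sup>2) * (fock_norm f)\<^sup>2"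
proof -
  have "ennreal (pi * (cmod (f w))\<^sup>2) \<le> ennreal (exp ((cmod w)\<^sup>2)) * ennreal (pi * (fock_norm f)\<^sup>2)"
    using fock_eval[OF Fock2_holo[OF f], of w] fock_integral_eq[OF f] by simp
  also have "\<dots> = ennreal (exp ((cmod w)\<^sup>2) * (pi * (fock_norm f)\<^sup>2))"
    by (subst ennreal_mult) auto
  finally have "pi * (cmod (f w))\<^sup>2 \<le> exp ((cmod w)\<^sup>2) * (pi * (fock_norm f)\<^sup>2)"
    by (subst (asm) ennreal_le_iff) auto
  then have "pi * (cmod (f w))\<^sup>2 \<le> pi * (exp ((cmod w)\<^sup>2) * (fock_norm f)\<^sup>2)"
    by (simp add: algebra_simps)
  then show ?thesis by simp
qed

lemma fock_eval_bound':
  assumes f: "f \<in> Fock2"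
  shows "cmod (f w) \<le> exp ((cmod w)\<^sup>2 / 2) * fock_norm f"
proof -
  have "(cmod (f w))\<^sup>2 \<le> (exp ((cmod w)\<^sup>2 / 2) * fock_norm f)\<^sup>2"
    using fock_eval_bound[OF f, of w]
    by (simp add: power_mult_distrib exp_double[symmetric] power2_eq_square[of "exp _"] exp_add[symmetric])
  then show ?thesis
    by (rule power2_le_imp_le) (simp add: fock_norm_nonneg)
qed

lemma fock_norm_zero: "f \<in> Fock2 \<Longrightarrow> fock_norm f = 0 \<Longrightarrow> f = (\<lambda>z. 0)"
  using fock_eval_bound' by fastforce

lemma holo_meas [measurable]: "f \<in> Fock2 \<Longrightarrow> f \<in> borel_measurable borel"
  by (rule holo_measurable[OF Fock2_holo])

lemma fock_integral_cmult:
  assumes f: "f holomorphic_on UNIV"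
  shows "fock_integral (\<lambda>z. c * f z) = ennreal ((cmod c)\<^sup>2) * fock_integral f"
proof -
  have [measurable]: "f \<in> borel_measurable borel" using f holo_measurable by auto
  show ?thesis
  unfolding fock_integral_def
  by (subst nn_integral_cmult[symmetric])
     (auto intro!: nn_integral_cong simp: ennreal_mult[symmetric] norm_mult power_mult_distrib mult.assoc)
qed

lemma fock_integral_add_le:
  assumes f: "f holomorphic_on UNIV" and g: "g holomorphic_on UNIV" and a: "a > 0" and b: "b > 0"
    and ab: "\<And>x y::complex. (cmod (x + y))\<^sup>2 \<le> a * (cmod x)\<^sup>2 + b * (cmod y)\<^sup>2"
  shows "fock_integral (\<lambda>z. f z + g z) \<le> ennreal a * fock_integral f + ennreal b * fock_integral g"
proof -
  have [measurable]: "f \<in> borel_measurable borel" "g \<in> borel_measurable borel"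
    using f g holo_measurable by auto
  have "fock_integral (\<lambda>z. f z + g z) \<le> (\<integral>\<^sup>+ z. ennreal a * ennreal ((cmod (f z))\<^sup>2 * exp (- (cmod z)\<^sup>2))
       + ennreal b * ennreal ((cmod (g z))\<^sup>2 * exp (- (cmod z)\<^sup>2)) \<partial>lborel)"
    unfolding fock_integral_def
  proof (intro nn_integral_mono)
    fix z :: complex
    have "(cmod (f z + g z))\<^sup>2 * exp (- (cmod z)\<^sup>2) \<le> (a * (cmod (f z))\<^sup>2 + b * (cmod (g z))\<^sup>2) * exp (- (cmod z)\<^sup>2)"
      by (rule mult_right_mono[OF ab]) simp
    also have "\<dots> = a * ((cmod (f z))\<^sup>2 * exp (- (cmod z)\<^sup>2)) + b * ((cmod (g z))\<^sup>2 * exp (- (cmod z)\<^sup>2))"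
      by (simp add: algebra_simps)
    finally show "ennreal ((cmod (f z + g z))\<^sup>2 * exp (- (cmod z)\<^sup>2)) \<le> ennreal a * ennreal ((cmod (f z))\<^sup>2 * exp (- (cmod z)\<^sup>2))
       + ennreal b * ennreal ((cmod (g z))\<^sup>2 * exp (- (cmod z)\<^sup>2))"
      using a b by (simp add: ennreal_mult[symmetric] ennreal_plus[symmetric] del: ennreal_plus)
  qed
  also have "\<dots> = ennreal a * fock_integral f + ennreal b * fock_integral g"
    unfolding fock_integral_def
    by (subst nn_integral_add) (auto simp: nn_integral_cmult)
  finally show ?thesis .
qed

lemma sq_ineq2: "(cmod (x + y))\<^sup>2 \<le> 2 * (cmod x)\<^sup>2 + 2 * (cmod y)\<^sup>2"
proof -
  have "cmod (x + y) \<le> cmod x + cmod y" by (rule norm_triangle_ineq)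
  then have "(cmod (x + y))\<^sup>2 \<le> (cmod x + cmod y)\<^sup>2" by (simp add: power_mono)
  also have "\<dots> \<le> 2 * (cmod x)\<^sup>2 + 2 * (cmod y)\<^sup>2"
    using sum_squares_bound[of "cmod x" "cmod y"] by (simp add: power2_eq_square algebra_simps)
  finally show ?thesis .
qed

lemma sq_ineq_lam:
  assumes l: "l > 0"
  shows "(cmod (x + y))\<^sup>2 \<le> (1 + l) * (cmod x)\<^sup>2 + (1 + 1 / l) * (cmod y)\<^sup>2"
proof -
  have "cmod (x + y) \<le> cmod x + cmod y" by (rule norm_triangle_ineq)
  then have "(cmod (x + y))\<^sup>2 \<le> (cmod x + cmod y)\<^sup>2" by (simp add: power_mono)
  also have "\<dots> \<le> (1 + l) * (cmod x)\<^sup>2 + (1 + 1 / l) * (cmod y)\<^sup>2"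
  proof -
    have "0 \<le> (l * cmod x - cmod y)\<^sup>2" by simp
    then have "2 * l * (cmod x * cmod y) \<le> l * (l * (cmod x)\<^sup>2) + (cmod y)\<^sup>2"
      by (simp add: power2_eq_square algebra_simps)
    then have "2 * (cmod x * cmod y) \<le> l * (cmod x)\<^sup>2 + (cmod y)\<^sup>2 / l"
      using l by (simp add: field_simps)
    then show ?thesis by (simp add: power2_eq_square algebra_simps)
  qed
  finally show ?thesis .
qed

lemma Fock2_zero: "(\<lambda>z. 0) \<in> Fock2"
  by (simp add: Fock2_def fock_integral_def)

lemma Fock2_add: "f \<in> Fock2 \<Longrightarrow> g \<in> Fock2 \<Longrightarrow> (\<lambda>z. f z + g z) \<in> Fock2"
  using fock_integral_add_le[of f g 2 2, OF _ _ _ _ sq_ineq2]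
  by (auto simp: Fock2_def ennreal_mult_less_top intro: holomorphic_intros le_less_trans)

lemma Fock2_cmult: "f \<in> Fock2 \<Longrightarrow> (\<lambda>z. c * f z) \<in> Fock2"
  by (auto simp: Fock2_def fock_integral_cmult ennreal_mult_less_top intro: holomorphic_intros)

lemma Fock2_uminus: "f \<in> Fock2 \<Longrightarrow> (\<lambda>z. - f z) \<in> Fock2"
  using Fock2_cmult[of f "-1"] by simp

lemma Fock2_diff: "f \<in> Fock2 \<Longrightarrow> g \<in> Fock2 \<Longrightarrow> (\<lambda>z. f z - g z) \<in> Fock2"
  using Fock2_add[OF _ Fock2_uminus, of f g] by simp

lemma fock_norm_cmult: "f \<in> Fock2 \<Longrightarrow> fock_norm (\<lambda>z. c * f z) = cmod c * fock_norm f"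
proof -
  assume f: "f \<in> Fock2"
  have "ennreal (pi * (fock_norm (\<lambda>z. c * f z))\<^sup>2) = ennreal ((cmod c)\<^sup>2) * ennreal (pi * (fock_norm f)\<^sup>2)"
    using fock_integral_eq[OF f] fock_integral_eq[OF Fock2_cmult[OF f, of c]] fock_integral_cmult[OF Fock2_holo[OF f], of c]
    by simp
  also have "\<dots> = ennreal ((cmod c)\<^sup>2 * (pi * (fock_norm f)\<^sup>2))" by (subst ennreal_mult) auto
  finally have "pi * (fock_norm (\<lambda>z. c * f z))\<^sup>2 = pi * (cmod c * fock_norm f)\<^sup>2"
    by (subst (asm) ennreal_inj) (auto simp: power_mult_distrib algebra_simps)
  then have "(fock_norm (\<lambda>z. c * f z))\<^sup>2 = (cmod c * fock_norm f)\<^sup>2" by simp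
  then show ?thesis by (simp add: fock_norm_nonneg power2_eq_iff_nonneg)
qed

lemma fock_norm_triangle:
  assumes f: "f \<in> Fock2" and g: "g \<in> Fock2"
  shows "fock_norm (\<lambda>z. f z + g z) \<le> fock_norm f + fock_norm g"
proof (cases "fock_norm f = 0 \<or> fock_norm g = 0")
  case True
  then show ?thesis
  proof
    assume "fock_norm f = 0"
    then have "f = (\<lambda>z. 0)" using fock_norm_zero f by blast
    then show ?thesis by (simp add: fock_norm_nonneg)
  next
    assume "fock_norm g = 0"
    then have "g = (\<lambda>z. 0)" using fock_norm_zero g by blast
    then show ?thesis by (simp add: fock_norm_nonneg)
  qed
next
  case False
  define a where "a = fock_norm f"
  define b where "b = fock_norm g"
  have a: "a > 0" using False fock_norm_nonneg[of f] unfolding a_def by linarith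
  have b: "b > 0" using False fock_norm_nonneg[of g] unfolding b_def by linarith
  define l where "l = b / a"
  have l: "l > 0" using a b by (simp add: l_def)
  have l1: "0 < 1 + 1 / l" using l by (simp add: add_pos_pos)
  have "ennreal (pi * (fock_norm (\<lambda>z. f z + g z))\<^sup>2) \<le> ennreal (1 + l) * ennreal (pi * a\<^sup>2) + ennreal (1 + 1 / l) * ennreal (pi * b\<^sup>2)"
    using l1 fock_integral_add_le[OF Fock2_holo[OF f] Fock2_holo[OF g], of "1 + l" "1 + 1/l", OF _ _ sq_ineq_lam[OF l]] l
      fock_integral_eq[OF f] fock_integral_eq[OF g] fock_integral_eq[OF Fock2_add[OF f g]]
    by (simp add: a_def b_def)
  also have "\<dots> = ennreal ((1 + l) * (pi * a\<^sup>2) + (1 + 1 / l) * (pi * b\<^sup>2))"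
    using l by (simp add: ennreal_mult[symmetric] ennreal_plus[symmetric] del: ennreal_plus)
  also have "(1 + l) * (pi * a\<^sup>2) + (1 + 1 / l) * (pi * b\<^sup>2) = pi * (a + b)\<^sup>2"
    using a b by (simp add: l_def field_simps power2_eq_square)
  finally have "pi * (fock_norm (\<lambda>z. f z + g z))\<^sup>2 \<le> pi * (a + b)\<^sup>2"
    by (subst (asm) ennreal_le_iff) (auto)
  then have "(fock_norm (\<lambda>z. f z + g z))\<^sup>2 \<le> (a + b)\<^sup>2" by simp
  then show ?thesis unfolding a_def b_def
    by (rule power2_le_imp_le) (use a b in \<open>simp add: a_def b_def\<close>)
qed


typedef fock = "Fock2" morphisms fk mkfock
  using Fock2_zero by blast

setup_lifting type_definition_fock

lemma fk_in [simp]: "fk x \<in> Fock2" using fk by blast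

lemma fk_inject': "fk x = fk y \<Longrightarrow> x = y" using fk_inject by blast

instantiation fock :: real_vector
begin
lift_definition zero_fock :: fock is "\<lambda>z. 0" by (rule Fock2_zero)
lift_definition plus_fock :: "fock \<Rightarrow> fock \<Rightarrow> fock" is "\<lambda>f g z. f z + g z" by (rule Fock2_add)
lift_definition minus_fock :: "fock \<Rightarrow> fock \<Rightarrow> fock" is "\<lambda>f g z. f z - g z" by (rule Fock2_diff)
lift_definition uminus_fock :: "fock \<Rightarrow> fock" is "\<lambda>f z. - f z" by (rule Fock2_uminus)
lift_definition scaleR_fock :: "real \<Rightarrow> fock \<Rightarrow> fock" is "\<lambda>r f z. complex_of_real r * f z" by (rule Fock2_cmult)
instance
  by standard (transfer; auto simp: algebra_simps)+
end

lemmas fk_simps [simp] = zero_fock.rep_eq plus_fock.rep_eq minus_fock.rep_eq uminus_fock.rep_eq scaleR_fock.rep_eq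

instantiation fock :: real_normed_vector
begin
definition norm_fock :: "fock \<Rightarrow> real" where "norm_fock x = fock_norm (fk x)"
definition dist_fock :: "fock \<Rightarrow> fock \<Rightarrow> real" where "dist_fock x y = norm (x - y)"
definition sgn_fock :: "fock \<Rightarrow> fock" where "sgn_fock x = x /\<^sub>R norm x"
definition uniformity_fock :: "(fock \<times> fock) filter"
  where "uniformity_fock = (INF e\<in>{0 <..}. principal {(x, y). dist x y < e})"
definition open_fock :: "fock set \<Rightarrow> bool"
  where "open_fock S = (\<forall>x\<in>S. \<forall>\<^sub>F (x', y) in uniformity. x' = x \<longrightarrow> y \<in> S)"
instance
proof
  fix x y :: fock and a :: real
  show "norm x = 0 \<longleftrightarrow> x = 0"
  proof
    assume "norm x = 0"
    then have "fk x = (\<lambda>z. 0)" using fock_norm_zero[of "fk x"] by (simp add: norm_fock_def)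
    then have "fk x = fk 0" by simp
    then show "x = 0" by (rule fk_inject')
  next
    assume "x = 0"
    then show "norm x = 0" by (simp add: norm_fock_def fock_norm_def fock_integral_def)
  qed
  show "norm (x + y) \<le> norm x + norm y"
    unfolding norm_fock_def by (simp add: fock_norm_triangle)
  show "norm (a *\<^sub>R x) = \<bar>a\<bar> * norm x"
    unfolding norm_fock_def by (simp add: fock_norm_cmult)
qed (rule dist_fock_def sgn_fock_def uniformity_fock_def open_fock_def)+
end

lemma norm_fk: "norm x = fock_norm (fk x)" by (simp add: norm_fock_def)

lemma fk_eval_bound: "cmod (fk x w) \<le> exp ((cmod w)\<^sup>2 / 2) * norm x"
  unfolding norm_fk by (rule fock_eval_bound') simp

lemma fk_holo: "fk x holomorphic_on UNIV" by (rule Fock2_holo) simp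

lemma fock_eq_iff: "x = y \<longleftrightarrow> (\<forall>z. fk x z = fk y z)"
  using fk_inject by (auto simp: fun_eq_iff)


lemma fk_diff_eval: "cmod (fk x z - fk y z) \<le> exp ((cmod z)\<^sup>2 / 2) * dist x y"
  using fk_eval_bound[of "x - y" z] by (simp add: dist_norm)

lemma fock_complete_aux:
  fixes X :: "nat \<Rightarrow> fock"
  assumes C: "Cauchy X"
  shows "convergent X"
proof -
  define f where "f z = lim (\<lambda>n. fk (X n) z)" for z
  have pc: "(\<lambda>n. fk (X n) z) \<longlonglongrightarrow> f z" for z
  proof -
    have "Cauchy (\<lambda>n. fk (X n) z)"
    proof (rule metric_CauchyI)
      fix e :: real assume e: "e > 0"
      define c where "c = exp ((cmod z)\<^sup>2 / 2)"
      have c: "c > 0" by (simp add: c_def)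
      obtain M where M: "\<forall>m\<ge>M. \<forall>n\<ge>M. dist (X m) (X n) < e / c"
        using metric_CauchyD[OF C, of "e / c"] e c by auto
      have "dist (fk (X m) z) (fk (X n) z) < e" if "m \<ge> M" "n \<ge> M" for m n
      proof -
        have "dist (fk (X m) z) (fk (X n) z) \<le> c * dist (X m) (X n)"
          using fk_diff_eval[of "X m" z "X n"] by (simp add: dist_norm c_def)
        also have "\<dots> < c * (e / c)" using M that c by (intro mult_strict_left_mono) auto
        finally show ?thesis using c by simp
      qed
      then show "\<exists>M. \<forall>m\<ge>M. \<forall>n\<ge>M. dist (fk (X m) z) (fk (X n) z) < e" by blast
    qed
    then show ?thesis unfolding f_def using Cauchy_convergent_iff convergent_LIMSEQ_iff by blast
  qed
  have K: "\<exists>M. \<forall>n\<ge>M. (\<forall>z. cmod (fk (X n) z - f z) \<le> exp ((cmod z)\<^sup>2 / 2) * e)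
       \<and> fock_integral (\<lambda>z. fk (X n) z - f z) \<le> ennreal (pi * e\<^sup>2)" if e: "e > 0" for e
  proof -
    obtain M where M: "\<forall>m\<ge>M. \<forall>n\<ge>M. dist (X m) (X n) < e"
      using metric_CauchyD[OF C e] by auto
    have "(\<forall>z. cmod (fk (X n) z - f z) \<le> exp ((cmod z)\<^sup>2 / 2) * e)
       \<and> fock_integral (\<lambda>z. fk (X n) z - f z) \<le> ennreal (pi * e\<^sup>2)" if n: "n \<ge> M" for n
    proof (intro conjI allI)
      fix z
      have "(\<lambda>m. cmod (fk (X n) z - fk (X m) z)) \<longlonglongrightarrow> cmod (fk (X n) z - f z)"
        by (intro tendsto_intros pc)
      moreover have "\<forall>\<^sub>F m in sequentially. cmod (fk (X n) z - fk (X m) z) \<le> exp ((cmod z)\<^sup>2 / 2) * e"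
      proof (rule eventually_sequentiallyI[of M])
        fix m assume "m \<ge> M"
        then have "dist (X n) (X m) \<le> e" using M n by (simp add: less_imp_le)
        then show "cmod (fk (X n) z - fk (X m) z) \<le> exp ((cmod z)\<^sup>2 / 2) * e"
          using fk_diff_eval[of "X n" z "X m"] by (meson exp_gt_zero less_imp_le mult_left_mono order_trans)
      qed
      ultimately show "cmod (fk (X n) z - f z) \<le> exp ((cmod z)\<^sup>2 / 2) * e"
        by (rule tendsto_upperbound) simp
    next
      define u where "u m z = ennreal ((cmod (fk (X n) z - fk (X m) z))\<^sup>2 * exp (- (cmod z)\<^sup>2))" for m z
      have um: "u m \<in> borel_measurable lborel" for m
      proof -
        have [measurable]: "fk (X n) \<in> borel_measurable borel" "fk (X m) \<in> borel_measurable borel" by simp_all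
        have "u m \<in> borel_measurable borel" unfolding u_def by measurable
        then show ?thesis by (subst measurable_cong_sets[OF sets_lborel refl])
      qed
      have lim: "liminf (\<lambda>m. u m z) = ennreal ((cmod (fk (X n) z - f z))\<^sup>2 * exp (- (cmod z)\<^sup>2))" for z
        unfolding u_def by (intro lim_imp_Liminf) (auto intro!: tendsto_intros pc)
      have "fock_integral (\<lambda>z. fk (X n) z - f z) = (\<integral>\<^sup>+ z. liminf (\<lambda>m. u m z) \<partial>lborel)"
        unfolding fock_integral_def lim ..
      also have "\<dots> \<le> liminf (\<lambda>m. integral\<^sup>N lborel (u m))"
        by (rule nn_integral_liminf[OF um])
      also have "\<dots> \<le> limsup (\<lambda>m. integral\<^sup>N lborel (u m))"
        by (rule Liminf_le_Limsup) simp
      also have "\<dots> \<le> ennreal (pi * e\<^sup>2)"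
      proof (rule Limsup_bounded, rule eventually_sequentiallyI[of M])
        fix m assume "m \<ge> M"
        then have d: "dist (X n) (X m) < e" using M n by simp
        have "integral\<^sup>N lborel (u m) = fock_integral (fk (X n - X m))"
          unfolding u_def fock_integral_def by simp
        also have "\<dots> = ennreal (pi * (norm (X n - X m))\<^sup>2)"
          using fock_integral_eq[OF fk_in[of "X n - X m"]] by (simp add: norm_fk)
        also have "\<dots> \<le> ennreal (pi * e\<^sup>2)"
          using d by (intro ennreal_leI mult_left_mono power_mono) (auto simp: dist_norm)
        finally show "integral\<^sup>N lborel (u m) \<le> ennreal (pi * e\<^sup>2)" .
      qed
      finally show "fock_integral (\<lambda>z. fk (X n) z - f z) \<le> ennreal (pi * e\<^sup>2)" .
    qed
    then show ?thesis by blast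
  qed
  have fh: "f holomorphic_on UNIV"
  proof -
    have hb: "f holomorphic_on ball 0 R" if R: "R > 0" for R
    proof -
      have ul: "uniform_limit (cball 0 R) (\<lambda>n. fk (X n)) f sequentially"
        unfolding uniform_limit_iff
      proof (intro allI impI)
        fix e :: real assume e: "e > 0"
        define c where "c = exp (R\<^sup>2 / 2)"
        have c: "c > 0" by (simp add: c_def)
        obtain M where M: "\<forall>n\<ge>M. \<forall>z. cmod (fk (X n) z - f z) \<le> exp ((cmod z)\<^sup>2 / 2) * (e / (2 * c))"
          using K[of "e / (2 * c)"] e c by auto
        show "\<forall>\<^sub>F n in sequentially. \<forall>x\<in>cball 0 R. dist (fk (X n) x) (f x) < e"
        proof (rule eventually_sequentiallyI[of M], intro ballI)
          fix n x assume n: "n \<ge> M" and x: "x \<in> cball (0::complex) R"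
          have "exp ((cmod x)\<^sup>2 / 2) \<le> c"
            using x R unfolding c_def by (auto intro!: power_mono)
          then have "exp ((cmod x)\<^sup>2 / 2) * (e / (2 * c)) \<le> c * (e / (2 * c))"
            using e c by (intro mult_right_mono) auto
          moreover have "cmod (fk (X n) x - f x) \<le> exp ((cmod x)\<^sup>2 / 2) * (e / (2 * c))"
            using M n by blast
          ultimately have "dist (fk (X n) x) (f x) \<le> c * (e / (2 * c))"
            unfolding dist_norm by linarith
          also have "\<dots> < e" using c e by simp
          finally show "dist (fk (X n) x) (f x) < e" .
        qed
      qed
      have "\<forall>\<^sub>F n in sequentially. continuous_on (cball 0 R) (fk (X n)) \<and> fk (X n) holomorphic_on ball 0 R"
      proof (intro always_eventually allI conjI)
        fix n
        show "continuous_on (cball 0 R) (fk (X n))"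
          using holomorphic_on_imp_continuous_on[OF fk_holo] continuous_on_subset by blast
        show "fk (X n) holomorphic_on ball 0 R"
          using fk_holo holomorphic_on_subset by blast
      qed
      from holomorphic_uniform_limit[OF this ul] show ?thesis by auto
    qed
    show ?thesis unfolding holomorphic_on_def
    proof
      fix z :: complex
      have "f field_differentiable at z"
        by (rule holomorphic_on_imp_differentiable_at[OF hb[of "cmod z + 1"]]) (auto intro: add_nonneg_pos)
      then show "f field_differentiable at z within UNIV" by simp
    qed
  qed
  obtain M where M: "\<forall>n\<ge>M. fock_integral (\<lambda>z. fk (X n) z - f z) \<le> ennreal (pi * 1\<^sup>2)"
    using K[of 1] by auto
  have "(\<lambda>z. fk (X M) z - f z) \<in> Fock2"
    using M fh fk_holo[of "X M"] unfolding Fock2_def by (auto intro!: holomorphic_intros le_less_trans[OF _ ennreal_less_top])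
  from Fock2_diff[OF fk_in[of "X M"] this] have fF: "f \<in> Fock2" by simp
  have "X \<longlonglongrightarrow> mkfock f"
  proof (rule LIMSEQ_I)
    fix r :: real assume r: "r > 0"
    obtain N where N: "\<forall>n\<ge>N. fock_integral (\<lambda>z. fk (X n) z - f z) \<le> ennreal (pi * (r/2)\<^sup>2)"
      using K[of "r/2"] r by auto
    have "norm (X n - mkfock f) < r" if "n \<ge> N" for n
    proof -
      have fe: "fk (X n - mkfock f) = (\<lambda>z. fk (X n) z - f z)"
        using fF by (simp add: mkfock_inverse)
      have "fock_integral (fk (X n - mkfock f)) = ennreal (pi * (norm (X n - mkfock f))\<^sup>2)"
        unfolding norm_fk by (rule fock_integral_eq[OF fk_in])
      then have "fock_integral (\<lambda>z. fk (X n) z - f z) = ennreal (pi * (norm (X n - mkfock f))\<^sup>2)"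
        unfolding fe .
      moreover have "fock_integral (\<lambda>z. fk (X n) z - f z) \<le> ennreal (pi * (r/2)\<^sup>2)"
        using N that by blast
      ultimately have "ennreal (pi * (norm (X n - mkfock f))\<^sup>2) \<le> ennreal (pi * (r/2)\<^sup>2)"
        by simp
      then have "pi * (norm (X n - mkfock f))\<^sup>2 \<le> pi * (r/2)\<^sup>2"
        by (subst (asm) ennreal_le_iff) auto
      then have "(norm (X n - mkfock f))\<^sup>2 \<le> (r/2)\<^sup>2" by simp
      then have "norm (X n - mkfock f) \<le> r/2"
        by (rule power2_le_imp_le) (use r in simp)
      then show ?thesis using r by simp
    qed
    then show "\<exists>no. \<forall>n\<ge>no. norm (X n - mkfock f) < r" by blast
  qed
  then show ?thesis unfolding convergent_def by blast
qed

instance fock :: banach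
  by standard (rule fock_complete_aux)


lemma vd_quot:
  fixes F :: "real \<Rightarrow> 'a::real_normed_vector"
  assumes d: "(F has_vector_derivative v) (at u within {a..b})" and u: "a \<le> u" "u < b"
  shows "((\<lambda>t. (1/t) *\<^sub>R (F (u + t) - F u)) \<longlongrightarrow> v) (at_right 0)"
proof -
  have "((\<lambda>y. (1 / norm (y - u)) *\<^sub>R (F y - (F u + (y - u) *\<^sub>R v))) \<longlongrightarrow> 0) (at u within {a..b})"
    using d unfolding has_vector_derivative_def has_derivative_within by blast
  moreover have "filterlim (\<lambda>t. u + t) (at u within {a..b}) (at_right 0)"
    unfolding filterlim_at
  proof
    have "\<forall>\<^sub>F t in at_right 0. t < b - u" using u
      unfolding eventually_at_right[OF zero_less_one] by (intro exI[of _ "b - u"]) auto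
    then show "\<forall>\<^sub>F t in at_right (0::real). u + t \<in> {a..b} \<and> u + t \<noteq> u"
      using eventually_at_right_less[of 0] by eventually_elim (use u in auto)
    show "((\<lambda>t. u + t) \<longlongrightarrow> u) (at_right 0)"
      by (rule tendsto_eq_intros) (auto intro: tendsto_ident_at)
  qed
  ultimately have "((\<lambda>t. (1 / norm (u + t - u)) *\<^sub>R (F (u + t) - (F u + (u + t - u) *\<^sub>R v))) \<longlongrightarrow> 0) (at_right 0)"
    by (rule filterlim_compose)
  moreover have "\<forall>\<^sub>F t in at_right 0. (1 / norm (u + t - u)) *\<^sub>R (F (u + t) - (F u + (u + t - u) *\<^sub>R v))
      = (1/t) *\<^sub>R (F (u + t) - F u) - v"
    using eventually_at_right_less[of 0]
    by eventually_elim (auto simp: algebra_simps)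
  ultimately have "((\<lambda>t. (1/t) *\<^sub>R (F (u + t) - F u) - v) \<longlongrightarrow> 0) (at_right 0)"
    by (rule Lim_transform_eventually)
  then show ?thesis by (simp add: LIM_zero_iff)
qed

locale fsg =
  fixes T :: "real \<Rightarrow> (complex \<Rightarrow> complex) \<Rightarrow> (complex \<Rightarrow> complex)" and om :: real
  assumes C0: "C0_semigroup_Fock T"
    and qc: "\<And>t f. t \<ge> 0 \<Longrightarrow> f \<in> Fock2 \<Longrightarrow> fock_norm (T t f) \<le> exp (om * t) * fock_norm f"
begin

lemma T_in: "t \<ge> 0 \<Longrightarrow> f \<in> Fock2 \<Longrightarrow> T t f \<in> Fock2"
  using C0 unfolding C0_semigroup_Fock_def by blast

lemma T_lin: "t \<ge> 0 \<Longrightarrow> f \<in> Fock2 \<Longrightarrow> g \<in> Fock2 \<Longrightarrow> T t (\<lambda>z. c * f z + g z) = (\<lambda>z. c * T t f z + T t g z)"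
  using C0 unfolding C0_semigroup_Fock_def by blast

lemma T0: "f \<in> Fock2 \<Longrightarrow> T 0 f = f"
  using C0 unfolding C0_semigroup_Fock_def by blast

lemma T_comp: "s \<ge> 0 \<Longrightarrow> t \<ge> 0 \<Longrightarrow> f \<in> Fock2 \<Longrightarrow> T (s + t) f = T s (T t f)"
  using C0 unfolding C0_semigroup_Fock_def by blast

lemma T_cont: "f \<in> Fock2 \<Longrightarrow> ((\<lambda>t. fock_norm (\<lambda>z. T t f z - f z)) \<longlongrightarrow> 0) (at_right 0)"
  using C0 unfolding C0_semigroup_Fock_def by blast

lemma T_zero: "t \<ge> 0 \<Longrightarrow> T t (\<lambda>z. 0) = (\<lambda>z. 0)"
  using T_lin[of t "\<lambda>z. 0" "\<lambda>z. 0" "-1"] Fock2_zero by simp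

definition U :: "real \<Rightarrow> fock \<Rightarrow> fock" where "U t x = mkfock (T t (fk x))"

lemma fk_U: "t \<ge> 0 \<Longrightarrow> fk (U t x) = T t (fk x)"
  unfolding U_def by (simp add: mkfock_inverse T_in)

lemma U_add: "t \<ge> 0 \<Longrightarrow> U t (x + y) = U t x + U t y"
  using T_lin[of t "fk x" "fk y" 1] by (simp add: fock_eq_iff fk_U)

lemma U_scale: "t \<ge> 0 \<Longrightarrow> U t (r *\<^sub>R x) = r *\<^sub>R U t x"
  using T_lin[of t "fk x" "\<lambda>z. 0" "complex_of_real r"] Fock2_zero T_zero[of t]
  by (simp add: fock_eq_iff fk_U)

lemma U_norm: "t \<ge> 0 \<Longrightarrow> norm (U t x) \<le> exp (om * t) * norm x"
  using qc[of t "fk x"] by (simp add: norm_fk fk_U)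

lemma U_bl: "t \<ge> 0 \<Longrightarrow> bounded_linear (U t)"
proof (rule bounded_linear_intro[of _ "exp (om * t)"])
  fix x y r assume t: "t \<ge> 0"
  show "U t (x + y) = U t x + U t y" using t by (rule U_add)
  show "U t (r *\<^sub>R x) = r *\<^sub>R U t x" using t by (rule U_scale)
  show "norm (U t x) \<le> norm x * exp (om * t)" using U_norm[OF t, of x] by (simp add: mult.commute)
qed

lemma U_diff: "t \<ge> 0 \<Longrightarrow> U t (x - y) = U t x - U t y"
  using linear_diff[OF bounded_linear.linear[OF U_bl]] by blast

lemma U0: "U 0 x = x"
  by (simp add: fock_eq_iff fk_U T0)

lemma U_comp: "s \<ge> 0 \<Longrightarrow> t \<ge> 0 \<Longrightarrow> U (s + t) x = U s (U t x)"
  by (simp add: fock_eq_iff fk_U T_comp)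

lemma U_cont0: "((\<lambda>t. norm (U t x - x)) \<longlongrightarrow> 0) (at_right 0)"
proof -
  have "\<forall>\<^sub>F t in at_right 0. fock_norm (\<lambda>z. T t (fk x) z - fk x z) = norm (U t x - x)"
    using eventually_at_right_less[of 0] by eventually_elim (simp add: norm_fk fk_U)
  with T_cont[of "fk x"] show ?thesis by (auto intro: Lim_transform_eventually)
qed

lemma U_cont: "continuous_on {0..} (\<lambda>s. U s x)"
  unfolding continuous_on_iff
proof (intro ballI allI impI)
  fix s e :: real assume s: "s \<in> {0..}" and e: "e > 0"
  define M where "M = exp (\<bar>om\<bar> * s)"
  have M: "M > 0" by (simp add: M_def)
  obtain d where d: "d > 0" and dd: "\<And>h. 0 < h \<Longrightarrow> h < d \<Longrightarrow> norm (U h x - x) < e / M"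
  proof -
    have "\<forall>\<^sub>F h in at_right 0. dist (norm (U h x - x)) 0 < e / M"
      using tendstoD[OF U_cont0[of x], of "e / M"] M e by simp
    then obtain d where "d > 0" "\<And>h. 0 < h \<Longrightarrow> h < d \<Longrightarrow> dist (norm (U h x - x)) 0 < e / M"
      unfolding eventually_at_right[OF zero_less_one] by auto
    then show ?thesis using that by auto
  qed
  show "\<exists>d>0. \<forall>r\<in>{0..}. dist r s < d \<longrightarrow> dist (U r x) (U s x) < e"
  proof (intro exI[of _ d] conjI ballI impI d)
    fix r :: real assume r: "r \<in> {0..}" and rs: "dist r s < d"
    show "dist (U r x) (U s x) < e"
    proof (cases "r = s")
      case True then show ?thesis using e by simp
    next
      case False
      show ?thesis
      proof (cases "s < r")
        case True
        have "U r x - U s x = U s (U (r - s) x - x)"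
          using U_comp[of s "r - s" x] s True by (simp add: U_diff)
        then have "norm (U r x - U s x) \<le> exp (om * s) * norm (U (r - s) x - x)"
          using U_norm s by simp
        also have "\<dots> \<le> M * norm (U (r - s) x - x)"
        proof (intro mult_right_mono)
          have "om * s \<le> \<bar>om\<bar> * s" using s by (intro mult_right_mono) auto
          then show "exp (om * s) \<le> M" unfolding M_def by simp
        qed simp
        also have "\<dots> < M * (e / M)"
          using dd[of "r - s"] True rs M by (intro mult_strict_left_mono) (auto simp: dist_real_def)
        finally show ?thesis using M by (simp add: dist_norm)
      next
        case False
        with \<open>r \<noteq> s\<close> have rl: "r < s" by simp
        have "U s x - U r x = U r (U (s - r) x - x)"
          using U_comp[of r "s - r" x] r rl by (simp add: U_diff)
        then have "norm (U s x - U r x) \<le> exp (om * r) * norm (U (s - r) x - x)"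
          using U_norm r by simp
        also have "\<dots> \<le> M * norm (U (s - r) x - x)"
        proof (intro mult_right_mono)
          have "om * r \<le> \<bar>om\<bar> * r" using r by (intro mult_right_mono) auto
          also have "\<dots> \<le> \<bar>om\<bar> * s" using rl by (intro mult_left_mono) auto
          finally have "om * r \<le> \<bar>om\<bar> * s" .
          then show "exp (om * r) \<le> M" unfolding M_def by simp
        qed simp
        also have "\<dots> < M * (e / M)"
          using dd[of "s - r"] rl rs M by (intro mult_strict_left_mono) (auto simp: dist_real_def)
        finally show ?thesis using M by (simp add: dist_norm norm_minus_commute)
      qed
    qed
  qed
qed

end


lemma fk_diff_fun: "fk (a - b) = (\<lambda>z. fk a z - fk b z)" by (simp add: fun_eq_iff)
lemma fk_scale_fun: "fk (r *\<^sub>R a) = (\<lambda>z. complex_of_real r * fk a z)" by (simp add: fun_eq_iff)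

lemma fk_differentiable: "fk w field_differentiable at z"
  using holomorphic_on_imp_differentiable_at[OF fk_holo open_UNIV] by blast

lemma deriv_fk_diff: "deriv (fk (a - b)) z = deriv (fk a) z - deriv (fk b) z"
  unfolding fk_diff_fun by (rule deriv_diff[OF fk_differentiable fk_differentiable])

lemma deriv_fk_scale: "deriv (fk (r *\<^sub>R a)) z = complex_of_real r * deriv (fk a) z"
  unfolding fk_scale_fun by (rule deriv_cmult[OF fk_differentiable])

lemma deriv_bound: "cmod (deriv (fk w) z) \<le> exp ((cmod z + 1)\<^sup>2 / 2) * norm w"
proof -
  have "cmod ((deriv ^^ 1) (fk w) z) \<le> fact 1 * (exp ((cmod z + 1)\<^sup>2 / 2) * norm w) / 1 ^ 1"
  proof (rule Cauchy_inequality)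
    show "fk w holomorphic_on ball z 1" using fk_holo holomorphic_on_subset by blast
    show "continuous_on (cball z 1) (fk w)"
      using holomorphic_on_imp_continuous_on[OF fk_holo] continuous_on_subset by blast
    fix x assume x: "cmod (z - x) = 1"
    have "cmod x \<le> cmod z + 1" using x norm_triangle_ineq2[of x z] by (simp add: norm_minus_commute)
    then have "(cmod x)\<^sup>2 \<le> (cmod z + 1)\<^sup>2" by (intro power_mono) auto
    then have "exp ((cmod x)\<^sup>2 / 2) \<le> exp ((cmod z + 1)\<^sup>2 / 2)" by simp
    then have "exp ((cmod x)\<^sup>2 / 2) * norm w \<le> exp ((cmod z + 1)\<^sup>2 / 2) * norm w"
      by (intro mult_right_mono) auto
    then show "cmod (fk w x) \<le> exp ((cmod z + 1)\<^sup>2 / 2) * norm w"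
      using fk_eval_bound[of w x] by linarith
  qed simp
  then show ?thesis by simp
qed

context fsg
begin

definition V :: "fock \<Rightarrow> real \<Rightarrow> fock" where "V x u = integral {0..u} (\<lambda>s. U s x)"

lemma U_cont_on: "0 \<le> a \<Longrightarrow> continuous_on {a..b} (\<lambda>s. U s x)"
  by (rule continuous_on_subset[OF U_cont]) auto

lemma U_integrable: "0 \<le> a \<Longrightarrow> (\<lambda>s. U s x) integrable_on {a..b}"
  by (rule integrable_continuous_real[OF U_cont_on])

lemma V0: "V x 0 = 0" by (simp add: V_def)

lemma V_quot: "0 \<le> u \<Longrightarrow> ((\<lambda>t. (1/t) *\<^sub>R (V x (u + t) - V x u)) \<longlongrightarrow> U u x) (at_right 0)"
proof -
  assume u: "0 \<le> u"
  have "((V x) has_vector_derivative U u x) (at u within {0..u+1})"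
    unfolding V_def[abs_def] by (rule integral_has_vector_derivative[OF U_cont_on]) (use u in auto)
  then show ?thesis by (rule vd_quot) (use u in auto)
qed

lemma shift_integral:
  assumes t: "0 \<le> t"
  shows "integral {0..\<tau>} (\<lambda>s. U (t + s) x) = integral {t..t+\<tau>} (\<lambda>s. U s x)"
proof -
  have "((\<lambda>s. U s x) has_integral integral {t..t+\<tau>} (\<lambda>s. U s x)) (cbox t (t+\<tau>))"
    using U_integrable[where a=t and b="t + \<tau>" and x=x] t by (simp add: integrable_integral)
  from has_integral_affinity[OF this, of 1 t]
  have "((\<lambda>s. U (1 *\<^sub>R s + t) x) has_integral integral {t..t+\<tau>} (\<lambda>s. U s x))
      ((\<lambda>s. (1 / 1) *\<^sub>R s + - ((1 / 1) *\<^sub>R t)) ` cbox t (t+\<tau>))" by simp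
  moreover have "(\<lambda>s. (1 / 1) *\<^sub>R s + - ((1 / 1) *\<^sub>R t)) ` cbox t (t+\<tau>) = {0..\<tau>}"
  proof -
    have "(\<lambda>s. (1 / 1) *\<^sub>R s + - ((1 / 1) *\<^sub>R t)) ` cbox t (t+\<tau>) = (\<lambda>s. s - t) ` {t..t+\<tau>}" by simp
    also have "\<dots> = {0..\<tau>}"
      by (auto simp: image_iff intro!: bexI[where x="_ + t"])
    finally show ?thesis .
  qed
  ultimately have "((\<lambda>s. U (t + s) x) has_integral integral {t..t+\<tau>} (\<lambda>s. U s x)) {0..\<tau>}"
    by (simp add: add.commute)
  then show ?thesis by (rule integral_unique)
qed

lemma U_V: "0 \<le> t \<Longrightarrow> 0 \<le> \<tau> \<Longrightarrow> U t (V x \<tau>) = V x (t + \<tau>) - V x t"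
proof -
  assume t: "0 \<le> t" and ta: "0 \<le> \<tau>"
  have "U t (V x \<tau>) = integral {0..\<tau>} (U t \<circ> (\<lambda>s. U s x))"
    unfolding V_def by (rule integral_linear[symmetric, OF U_integrable U_bl]) (use t in auto)
  also have "\<dots> = integral {0..\<tau>} (\<lambda>s. U (t + s) x)"
    by (rule integral_cong) (use t in \<open>auto simp: U_comp\<close>)
  also have "\<dots> = integral {t..t+\<tau>} (\<lambda>s. U s x)" by (rule shift_integral[OF t])
  also have "\<dots> = V x (t + \<tau>) - V x t"
    unfolding V_def using Henstock_Kurzweil_Integration.integral_combine[where a=0 and c=t and b="t + \<tau>" and f="\<lambda>s. U s x"] U_integrable[where a=0 and b="t + \<tau>" and x=x] t ta
    by (simp add: algebra_simps)
  finally show ?thesis .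
qed

lemma gen_V:
  assumes ta: "0 < \<tau>"
  shows "gen_limit T (fk (V x \<tau>)) (fk (U \<tau> x - x))"
  unfolding gen_limit_def
proof
  show "fk (U \<tau> x - x) \<in> Fock2" by (rule fk_in)
  define y where "y = V x \<tau>"
  define Q where "Q t = (1/t) *\<^sub>R (V x (\<tau> + t) - V x \<tau>) - (1/t) *\<^sub>R (V x (0 + t) - V x 0)" for t
  have Ql: "(Q \<longlongrightarrow> U \<tau> x - U 0 x) (at_right 0)"
    unfolding Q_def by (intro tendsto_diff V_quot) (use ta in auto)
  then have "((\<lambda>t. norm (Q t - (U \<tau> x - x))) \<longlongrightarrow> 0) (at_right 0)"
    by (simp add: U0 tendsto_norm_zero LIM_zero)
  moreover have "\<forall>\<^sub>F t in at_right 0. norm (Q t - (U \<tau> x - x)) =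
      fock_norm (\<lambda>z. (T t (fk y) z - fk y z) / complex_of_real t - fk (U \<tau> x - x) z)"
    using eventually_at_right_less[of 0]
  proof eventually_elim
    case (elim t)
    then have t: "t > 0" by simp
    have e: "V x (\<tau> + t) = V x t + U t y"
      using U_V[of t \<tau> x] t ta by (simp add: y_def add.commute)
    have Qt: "Q t = (1/t) *\<^sub>R (U t y - y)"
      unfolding Q_def e by (simp add: V0 y_def algebra_simps)
    have t0: "0 \<le> t" using t by simp
    have "fk (Q t - (U \<tau> x - x)) = (\<lambda>z. (T t (fk y) z - fk y z) / complex_of_real t - fk (U \<tau> x - x) z)"
      unfolding Qt fk_diff_fun[of "(1/t) *\<^sub>R (U t y - y)"] fk_scale_fun fk_diff_fun[of "U t y"] fk_U[OF t0]
      by (simp add: divide_inverse of_real_inverse mult.commute)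
    then show ?case by (simp add: norm_fk)
  qed
  ultimately show "((\<lambda>t. fock_norm (\<lambda>z. (T t (fk (V x \<tau>)) z - fk (V x \<tau>) z) / complex_of_real t - fk (U \<tau> x - x) z)) \<longlongrightarrow> 0) (at_right 0)"
    unfolding y_def by (rule Lim_transform_eventually)
qed

lemma V_small: "((\<lambda>\<tau>. (1/\<tau>) *\<^sub>R V x \<tau>) \<longlongrightarrow> x) (at_right 0)"
  using V_quot[of 0 x] by (simp add: V0 U0)

end


context fsg
begin

lemma fk_quot: "0 < t \<Longrightarrow> fk ((1/t) *\<^sub>R (U t X - X)) = (\<lambda>z. (T t (fk X) z - fk X z) / complex_of_real t)"
proof -
  assume t: "0 < t"
  then have t0: "0 \<le> t" by simp
  show ?thesis
    unfolding fk_scale_fun fk_diff_fun[of "U t X"] fk_U[OF t0]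
    by (simp add: divide_inverse of_real_inverse mult.commute)
qed

lemma gen_limit_unique:
  assumes f: "f \<in> Fock2" and g1: "gen_limit T f g1" and g2: "gen_limit T f g2"
  shows "g1 = g2"
proof -
  define X where "X = mkfock f"
  have fX: "fk X = f" using f by (simp add: X_def mkfock_inverse)
  have g1F: "g1 \<in> Fock2" and g2F: "g2 \<in> Fock2" using g1 g2 by (auto simp: gen_limit_def)
  define A1 where "A1 = mkfock g1"
  define A2 where "A2 = mkfock g2"
  have fA1: "fk A1 = g1" using g1F by (simp add: A1_def mkfock_inverse)
  have fA2: "fk A2 = g2" using g2F by (simp add: A2_def mkfock_inverse)
  define q where "q t = (1/t) *\<^sub>R (U t X - X)" for t
  have lim: "((\<lambda>t. norm (q t - A)) \<longlongrightarrow> 0) (at_right 0)" if "gen_limit T f (fk A)" for A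
  proof -
    have "((\<lambda>t. fock_norm (\<lambda>z. (T t f z - f z) / complex_of_real t - fk A z)) \<longlongrightarrow> 0) (at_right 0)"
      using that by (simp add: gen_limit_def)
    moreover have "\<forall>\<^sub>F t in at_right 0. fock_norm (\<lambda>z. (T t f z - f z) / complex_of_real t - fk A z) = norm (q t - A)"
      using eventually_at_right_less[of 0]
    proof eventually_elim
      case (elim t)
      have e1: "fk (q t - A) = (\<lambda>z. fk (q t) z - fk A z)" by (rule fk_diff_fun)
      have e2: "fk (q t) = (\<lambda>z. (T t f z - f z) / complex_of_real t)"
        unfolding q_def fk_quot[OF elim] fX ..
      have "fk (q t - A) = (\<lambda>z. (T t f z - f z) / complex_of_real t - fk A z)"
        unfolding e1 e2 ..
      then show ?case by (simp add: norm_fk)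
    qed
    ultimately show ?thesis by (rule Lim_transform_eventually)
  qed
  have l1: "((\<lambda>t. norm (q t - A1)) \<longlongrightarrow> 0) (at_right 0)" by (rule lim) (simp add: fA1 g1)
  have l2: "((\<lambda>t. norm (q t - A2)) \<longlongrightarrow> 0) (at_right 0)" by (rule lim) (simp add: fA2 g2)
  have "norm (A1 - A2) \<le> 0 + 0"
  proof (rule tendsto_le[OF _ tendsto_add[OF l2 l1] tendsto_const])
    show "\<forall>\<^sub>F t in at_right 0. norm (A1 - A2) \<le> norm (q t - A2) + norm (q t - A1)"
    proof (intro always_eventually allI)
      fix t
      have "A1 - A2 = (q t - A2) - (q t - A1)" by simp
      then show "norm (A1 - A2) \<le> norm (q t - A2) + norm (q t - A1)"
        by (metis norm_triangle_ineq4)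
    qed
  qed simp
  then have "A1 = A2" by simp
  then show ?thesis using fA1 fA2 by simp
qed

lemma pointwise_deriv:
  assumes gen: "is_generator_Fock T {f \<in> Fock2. (\<lambda>z. G z * deriv f z) \<in> Fock2} (\<lambda>f z. G z * deriv f z)"
  shows "((\<lambda>\<tau>. (fk (U \<tau> x) w - fk x w) / complex_of_real \<tau>) \<longlongrightarrow> G w * deriv (fk x) w) (at_right 0)"
proof -
  have dom: "gen_domain T = {f \<in> Fock2. (\<lambda>z. G z * deriv f z) \<in> Fock2}"
    and lim: "\<And>f. f \<in> gen_domain T \<Longrightarrow> gen_limit T f (\<lambda>z. G z * deriv f z)"
    using gen unfolding is_generator_Fock_def by auto
  have key: "G w * deriv (fk (V x \<tau>)) w = fk (U \<tau> x) w - fk x w" if t: "0 < \<tau>" for \<tau>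
  proof -
    have gl: "gen_limit T (fk (V x \<tau>)) (fk (U \<tau> x - x))" by (rule gen_V[OF t])
    then have "fk (V x \<tau>) \<in> gen_domain T" unfolding gen_domain_def by auto
    then have "gen_limit T (fk (V x \<tau>)) (\<lambda>z. G z * deriv (fk (V x \<tau>)) z)" by (rule lim)
    from gen_limit_unique[OF fk_in this gl]
    have "(\<lambda>z. G z * deriv (fk (V x \<tau>)) z) = fk (U \<tau> x - x)" .
    then show ?thesis by (simp add: fun_eq_iff)
  qed
  define C where "C = exp ((cmod w + 1)\<^sup>2 / 2)"
  have dl: "((\<lambda>\<tau>. deriv (fk ((1/\<tau>) *\<^sub>R V x \<tau>)) w) \<longlongrightarrow> deriv (fk x) w) (at_right 0)"
  proof -
    have n0: "((\<lambda>\<tau>. norm ((1/\<tau>) *\<^sub>R V x \<tau> - x)) \<longlongrightarrow> 0) (at_right 0)"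
      using V_small[of x] by (simp add: tendsto_norm_zero LIM_zero)
    have "((\<lambda>\<tau>. deriv (fk ((1/\<tau>) *\<^sub>R V x \<tau>)) w - deriv (fk x) w) \<longlongrightarrow> 0) (at_right 0)"
    proof (rule Lim_null_comparison)
      show "\<forall>\<^sub>F \<tau> in at_right 0. norm (deriv (fk ((1/\<tau>) *\<^sub>R V x \<tau>)) w - deriv (fk x) w) \<le> C * norm ((1/\<tau>) *\<^sub>R V x \<tau> - x)"
        by (intro always_eventually allI) (metis deriv_fk_diff deriv_bound C_def)
      show "((\<lambda>\<tau>. C * norm ((1/\<tau>) *\<^sub>R V x \<tau> - x)) \<longlongrightarrow> 0) (at_right 0)"
        using tendsto_mult_right_zero[OF n0, of C] by simp
    qed
    then show ?thesis by (simp add: LIM_zero_iff)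
  qed
  have "((\<lambda>\<tau>. G w * deriv (fk ((1/\<tau>) *\<^sub>R V x \<tau>)) w) \<longlongrightarrow> G w * deriv (fk x) w) (at_right 0)"
    by (intro tendsto_mult_left dl)
  moreover have "\<forall>\<^sub>F \<tau> in at_right 0. G w * deriv (fk ((1/\<tau>) *\<^sub>R V x \<tau>)) w = (fk (U \<tau> x) w - fk x w) / complex_of_real \<tau>"
    using eventually_at_right_less[of 0]
  proof eventually_elim
    case (elim \<tau>)
    have "G w * deriv (fk ((1/\<tau>) *\<^sub>R V x \<tau>)) w = complex_of_real (1/\<tau>) * (G w * deriv (fk (V x \<tau>)) w)"
      unfolding deriv_fk_scale by simp
    also have "\<dots> = (fk (U \<tau> x) w - fk x w) / complex_of_real \<tau>"
      using key[OF elim] by (simp add: divide_inverse of_real_inverse mult.commute)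
    finally show ?case .
  qed
  ultimately show ?thesis by (rule Lim_transform_eventually)
qed

end


definition Kf :: "complex \<Rightarrow> complex \<Rightarrow> complex" where "Kf w z = exp (cnj w * z)"

lemma Kf_holo: "Kf w holomorphic_on UNIV" unfolding Kf_def by (intro holomorphic_intros)

lemma Kf_integral: "fock_integral (Kf w) = ennreal (exp ((cmod w)\<^sup>2) * pi)"
proof -
  have pw: "(cmod (Kf w z))\<^sup>2 * exp (-(cmod z)\<^sup>2) = exp ((cmod w)\<^sup>2) * exp (-(cmod (- w + z))\<^sup>2)" for z
  proof -
    have e1: "(cmod (Kf w z))\<^sup>2 = exp (2 * Re (cnj w * z))"
      unfolding Kf_def norm_exp_eq_Re by (simp add: power2_eq_square exp_add[symmetric])
    have e2: "(cmod (- w + z))\<^sup>2 = (cmod w)\<^sup>2 - 2 * Re (cnj w * z) + (cmod z)\<^sup>2"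
      unfolding cmod_power2 by (simp add: power2_eq_square algebra_simps)
    show ?thesis unfolding e1 e2 exp_add[symmetric] by (simp add: algebra_simps)
  qed
  have "fock_integral (Kf w) = (\<integral>\<^sup>+ z. ennreal (exp ((cmod w)\<^sup>2)) * (\<lambda>u. ennreal (exp (-(cmod u)\<^sup>2))) (- w + z) \<partial>lborel)"
    unfolding fock_integral_def pw by (intro nn_integral_cong) (simp add: ennreal_mult)
  also have "\<dots> = ennreal (exp ((cmod w)\<^sup>2)) * (\<integral>\<^sup>+ z. (\<lambda>u. ennreal (exp (-(cmod u)\<^sup>2))) (- w + z) \<partial>lborel)"
    by (subst nn_integral_cmult) auto
  also have "(\<integral>\<^sup>+ z. (\<lambda>u. ennreal (exp (-(cmod u)\<^sup>2))) (- w + z) \<partial>lborel) = ennreal pi"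
    by (subst nn_integral_transl) (auto simp: gauss2)
  finally show ?thesis by (simp add: ennreal_mult)
qed

lemma Kf_Fock: "Kf w \<in> Fock2"
  unfolding Fock2_def using Kf_holo Kf_integral by simp

lemma sqrt_exp: "sqrt (exp a) = exp (a / 2)"
  by (rule real_sqrt_unique) (simp_all add: power2_eq_square exp_add[symmetric])

lemma Kf_norm: "fock_norm (Kf w) = exp ((cmod w)\<^sup>2 / 2)"
  unfolding fock_norm_def Kf_integral by (simp add: sqrt_exp)

lemma Kf_ww: "Kf w w = complex_of_real (exp ((cmod w)\<^sup>2))"
proof -
  have "cnj w * w = complex_of_real ((cmod w)\<^sup>2)"
    using complex_norm_square[of w] by (simp add: mult.commute)
  then show ?thesis unfolding Kf_def by (simp only: exp_of_real)
qed

lemma Kf_deriv: "deriv (Kf w) z = cnj w * Kf w z"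
proof -
  have "((\<lambda>z. exp (cnj w * z)) has_field_derivative exp (cnj w * z) * cnj w) (at z)"
    by (auto intro!: derivative_eq_intros)
  then show ?thesis unfolding Kf_def[abs_def] by (simp add: DERIV_imp_deriv mult.commute)
qed

lemma exp_quot: "((\<lambda>t. (exp (om * t) - 1) / t) \<longlongrightarrow> om) (at_right (0::real))"
proof -
  have "((\<lambda>t. exp (om * t)) has_field_derivative om) (at 0)"
    by (auto intro!: derivative_eq_intros)
  then have "((\<lambda>t. (exp (om * t) - exp (om * 0)) / (t - 0)) \<longlongrightarrow> om) (at 0)"
    unfolding has_field_derivative_iff by simp
  then have "((\<lambda>t. (exp (om * t) - 1) / t) \<longlongrightarrow> om) (at 0)" by simp
  then show ?thesis by (rule tendsto_mono[OF at_le, rotated]) simp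
qed

context fsg
begin

lemma Re_bound:
  assumes gen: "is_generator_Fock T {f \<in> Fock2. (\<lambda>z. G z * deriv f z) \<in> Fock2} (\<lambda>f z. G z * deriv f z)"
  shows "Re (G w * cnj w) \<le> om"
proof -
  define x where "x = mkfock (Kf w)"
  have fx: "fk x = Kf w" by (simp add: x_def mkfock_inverse Kf_Fock)
  define E where "E = exp ((cmod w)\<^sup>2)"
  have E: "E > 0" by (simp add: E_def)
  have nx: "norm x = exp ((cmod w)\<^sup>2 / 2)" by (simp add: norm_fk fx Kf_norm)
  have bnd: "cmod (fk (U t x) w) \<le> E * exp (om * t)" if t: "t \<ge> 0" for t
  proof -
    have "cmod (fk (U t x) w) \<le> exp ((cmod w)\<^sup>2 / 2) * norm (U t x)" by (rule fk_eval_bound)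
    also have "\<dots> \<le> exp ((cmod w)\<^sup>2 / 2) * (exp (om * t) * norm x)"
      by (intro mult_left_mono U_norm t) simp
    also have "\<dots> = E * exp (om * t)"
      unfolding nx E_def by (simp add: exp_add[symmetric] algebra_simps)
    finally show ?thesis .
  qed
  have l1: "((\<lambda>\<tau>. (fk (U \<tau> x) w - complex_of_real E) / complex_of_real \<tau>) \<longlongrightarrow> G w * (cnj w * complex_of_real E)) (at_right 0)"
    using pointwise_deriv[OF gen, of x w] by (simp add: fx Kf_deriv Kf_ww E_def)
  have l2: "((\<lambda>\<tau>. Re ((fk (U \<tau> x) w - complex_of_real E) / complex_of_real \<tau>)) \<longlongrightarrow> E * Re (G w * cnj w)) (at_right 0)"
  proof -
    have "Re (G w * (cnj w * complex_of_real E)) = E * Re (G w * cnj w)"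
      by (simp add: mult.assoc[symmetric])
    with tendsto_Re[OF l1] show ?thesis by simp
  qed
  have l3: "((\<lambda>\<tau>. E * ((exp (om * \<tau>) - 1) / \<tau>)) \<longlongrightarrow> E * om) (at_right 0)"
    by (intro tendsto_mult_left exp_quot)
  have "E * Re (G w * cnj w) \<le> E * om"
  proof (rule tendsto_le[OF _ l3 l2])
    show "\<forall>\<^sub>F \<tau> in at_right 0. Re ((fk (U \<tau> x) w - complex_of_real E) / complex_of_real \<tau>) \<le> E * ((exp (om * \<tau>) - 1) / \<tau>)"
      using eventually_at_right_less[of 0]
    proof eventually_elim
      case (elim \<tau>)
      have "Re (fk (U \<tau> x) w) \<le> E * exp (om * \<tau>)"
        using bnd[of \<tau>] elim complex_Re_le_cmod[of "fk (U \<tau> x) w"] by simp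
      then have "(Re (fk (U \<tau> x) w) - E) / \<tau> \<le> (E * exp (om * \<tau>) - E) / \<tau>"
        using elim by (intro divide_right_mono) auto
      then show ?case by (simp add: Re_divide_of_real algebra_simps)
    qed
  qed simp
  then show ?thesis using E by simp
qed

end


lemma affine_from_bound:
  fixes G :: "complex \<Rightarrow> complex"
  assumes G: "G holomorphic_on UNIV" and B: "\<And>w. Re (G w * cnj w) \<le> om"
  shows "\<exists>a b. (\<forall>z. G z = a * z + b) \<and> Re a \<le> 0"
proof -
  define b where "b = G 0"
  define H where "H = (\<lambda>z. if z = 0 then deriv G 0 else (G z - G 0) / (z - 0))"
  have H: "H holomorphic_on UNIV" unfolding H_def by (rule pole_lemma_open[OF G]) simp
  have GH: "G z = H z * z + b" for z
    by (cases "z = 0") (simp_all add: H_def b_def)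
  have reH: "Re (H z) * (cmod z)\<^sup>2 + Re (b * cnj z) \<le> om" for z
  proof -
    have zz: "z * cnj z = complex_of_real ((cmod z)\<^sup>2)" by (rule complex_norm_square[symmetric])
    have "G z * cnj z = H z * complex_of_real ((cmod z)\<^sup>2) + b * cnj z"
      unfolding GH zz[symmetric] by (simp add: algebra_simps)
    then have "Re (G z * cnj z) = Re (H z) * (cmod z)\<^sup>2 + Re (b * cnj z)" by simp
    then show ?thesis using B[of z] by simp
  qed
  have "compact (H ` cball 0 1)"
    by (intro compact_continuous_image holomorphic_on_imp_continuous_on holomorphic_on_subset[OF H]) auto
  then have "bounded (H ` cball 0 1)" by (rule compact_imp_bounded)
  then obtain B1 where B1': "\<forall>x\<in>H ` cball 0 1. norm x \<le> B1"
    unfolding bounded_iff by (elim exE) (rule that)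
  have B1: "\<And>z. z \<in> cball 0 1 \<Longrightarrow> cmod (H z) \<le> B1" using B1' by simp
  define M where "M = max B1 (\<bar>om\<bar> + cmod b)"
  have ReM: "Re (H z) \<le> M" for z
  proof (cases "cmod z \<le> 1")
    case True
    then have "cmod (H z) \<le> B1" using B1 by simp
    then show ?thesis using complex_Re_le_cmod[of "H z"] unfolding M_def by linarith
  next
    case False
    define r where "r = cmod z"
    have r1: "r > 1" using False by (simp add: r_def)
    have rr: "r \<le> r\<^sup>2" using r1 by (simp add: power2_eq_square)
    have "- Re (b * cnj z) \<le> cmod b * r"
      using abs_Re_le_cmod[of "b * cnj z"] by (simp add: norm_mult r_def)
    then have "Re (H z) * r\<^sup>2 \<le> \<bar>om\<bar> + cmod b * r"
      using reH[of z] unfolding r_def by linarith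
    also have "\<dots> \<le> \<bar>om\<bar> * r\<^sup>2 + cmod b * r\<^sup>2"
    proof -
      have "1 \<le> r\<^sup>2" using r1 rr by linarith
      then have "\<bar>om\<bar> * 1 \<le> \<bar>om\<bar> * r\<^sup>2" by (intro mult_left_mono) auto
      then have "\<bar>om\<bar> \<le> \<bar>om\<bar> * r\<^sup>2" by simp
      moreover have "cmod b * r \<le> cmod b * r\<^sup>2" using rr by (simp add: mult_left_mono)
      ultimately show ?thesis by linarith
    qed
    finally have "Re (H z) * r\<^sup>2 \<le> (\<bar>om\<bar> + cmod b) * r\<^sup>2" by (simp add: algebra_simps)
    then have "Re (H z) \<le> \<bar>om\<bar> + cmod b" using r1 by simp
    then show ?thesis unfolding M_def by simp
  qed
  define c where "c = complex_of_real (M + 1)"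
  have nz: "H z - c \<noteq> 0" for z
  proof
    assume "H z - c = 0"
    then have "Re (H z) = M + 1" by (simp add: c_def complex_eq_iff)
    with ReM[of z] show False by simp
  qed
  define f where "f z = 1 / (H z - c)" for z
  have fh: "f holomorphic_on UNIV" unfolding f_def using nz by (intro holomorphic_intros H) auto
  have fb: "cmod (f z) \<le> 1" for z
  proof -
    have "Re (H z - c) \<le> -1" using ReM[of z] by (simp add: c_def)
    then have "1 \<le> cmod (H z - c)" using abs_Re_le_cmod[of "H z - c"] by linarith
    then show ?thesis unfolding f_def by (simp add: norm_divide divide_le_eq_1)
  qed
  have "bounded (range f)" unfolding bounded_iff using fb by blast
  from Liouville_theorem[OF fh this] have "f z = f 0" for z
    unfolding constant_on_def by auto
  then have Hc: "H z = H 0" for z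
    using nz[of z] nz[of 0] by (simp add: f_def)
  define a where "a = H 0"
  have Ga: "G z = a * z + b" for z using GH[of z] Hc[of z] by (simp add: a_def mult.commute)
  have "Re a \<le> 0"
  proof (rule ccontr)
    assume "\<not> Re a \<le> 0"
    then have ap: "Re a > 0" by simp
    define r where "r = max 1 ((\<bar>om\<bar> + cmod b + 1) / Re a)"
    have r1: "r \<ge> 1" by (simp add: r_def)
    have ra: "Re a * r \<ge> \<bar>om\<bar> + cmod b + 1"
    proof -
      have "(\<bar>om\<bar> + cmod b + 1) / Re a \<le> r" by (simp add: r_def)
      then show ?thesis using ap by (simp add: field_simps)
    qed
    have "Re a * r\<^sup>2 + Re (b * cnj (complex_of_real r)) \<le> om"
      using reH[of "complex_of_real r"] Hc[of "complex_of_real r"] r1 by (simp add: a_def)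
    moreover have "- Re (b * cnj (complex_of_real r)) \<le> cmod b * r"
      using abs_Re_le_cmod[of "b * cnj (complex_of_real r)"] r1 by (simp add: norm_mult)
    ultimately have "Re a * r\<^sup>2 \<le> \<bar>om\<bar> + cmod b * r" by linarith
    also have "\<dots> \<le> (\<bar>om\<bar> + cmod b) * r"
    proof -
      have "\<bar>om\<bar> * 1 \<le> \<bar>om\<bar> * r" using r1 by (intro mult_left_mono) auto
      then show ?thesis by (simp add: algebra_simps)
    qed
    finally have "(Re a * r) * r \<le> (\<bar>om\<bar> + cmod b) * r" by (simp add: power2_eq_square algebra_simps)
    then have "Re a * r \<le> \<bar>om\<bar> + cmod b" using r1 by simp
    with ra show False by simp
  qed
  with Ga show ?thesis by blast
qed

theorem proposition2p6:
  fixes G :: "complex \<Rightarrow> complex"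
    and T :: "real \<Rightarrow> (complex \<Rightarrow> complex) \<Rightarrow> (complex \<Rightarrow> complex)"
  assumes "G holomorphic_on UNIV"
    and "C0_semigroup_Fock T"
    and "quasicontractive_Fock T"
    and "is_generator_Fock T {f \<in> Fock2. (\<lambda>z. G z * deriv f z) \<in> Fock2}
           (\<lambda>f z. G z * deriv f z)"
  shows "\<exists>a b :: complex. (\<forall>z. G z = a * z + b) \<and> Re a \<le> 0"
proof -
  obtain om where om: "\<forall>t\<ge>0. \<forall>f\<in>Fock2. fock_norm (T t f) \<le> exp (om * t) * fock_norm f"
    using assms(3) unfolding quasicontractive_Fock_def by blast
  interpret fsg T om using assms(2) om by unfold_locales auto
  have "\<And>w. Re (G w * cnj w) \<le> om" by (rule Re_bound[OF assms(4)])
  then show ?thesis by (rule affine_from_bound[OF assms(1)])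
qed


end
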